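(* Consider bond percolation with (bond-)interfaces, or site percolation with site-interfaces, on a graph $G\in\mathcal S$. Let $N_n$ be the number of occurring (site-)interfaces $P$ of $o$ with $|P|=n$, and $B_p=\limsup_{n\to\infty}\mathbb E_p(N_n)^{1/n}$. Then $B_p$ is a continuous function of $p\in(0,1)$.
   Context: Interfaces. Let $G$ be an infinite, connected, locally finite, 1-ended, 2-connected graph with a vertex $o$ and a fixed basis $\mathcal P$ of its cycle space over $\mathbb Z_2$. Each edge $vw$ has directions $\vec{vw},\vec{wv}$; for $F\subseteq E(G)$ and subgraph $D$, $\vec F_D=\{\vec{vz}: vz\in F, z\in V(D)\}$. A $\mathcal P$-path connecting $\vec{vw},\vec{yx}$ is a path $Q$ with endvertices $w,y$ (possibly $w=y$) such that the path with edge set $E(Q)\cup\{vw,yx\}$ is a subpath of a cycle in $\mathcal P$; it connects an edge $e$ to a set $J$ if it connects a direction of $e$ to an element of $J$. $J$ is $F$-connected if for every partition into non-empty $J_1,J_2$ some $\mathcal P$-path in $G\setminus F$ connects an element of $J_1$ to one of $J_2$. An interface is a pair $(P,\partial P)$ of edge sets with: (i) $\partial P$ separates $o$ from infinity; (ii) a unique finite component $D$ of $G\setminus\partial P$ contains an endvertex of each edge of $\partial P$; (iii) $\vec{\partial P}_D$ is $\partial P$-connected; (iv) $P$ is the set of $e\in E(D)$ connected to $\vec{\partial P}_D$ by a $\mathcal P$-path in $G\setminus\partial P$. Sizes count edges; it occurs in a bond configuration if all edges of $P$ are occupied and all edges of $\partial P$ vacant. It is a site-interface if no edge of $\partial P$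 has both endvertices in $V(P)$; then $P$ is identified with $V(P)$ and $\partial P$ with the vertices incident with an edge of $\partial P$ but no edge of $P$, sizes count vertices, and it occurs in a site configuration if all vertices of $P$ are occupied and all of $\partial P$ vacant. The class $\mathcal S$ (with fixed $\mathcal P$): (a) quasi-transitive planar lattices (2-connected, locally finite, connected graphs embedded in $\mathbb R^2$ preserved by translations by two linearly independent vectors, with finitely many vertex orbits), $\mathcal P$ = face-boundary cycles; (b) $\mathbb Z^d$, $d\ge2$, $\mathcal P$ = 4-cycles bounding square faces of unit cubes; (c) $\mathbb T^d$, $d\ge2$: $\mathbb Z^d$ plus edges $xy$ with $y_i-x_i=1$ for exactly two coordinates and $y_i=x_i$ otherwise, $\mathcal P$ = resulting triangles. *)

theory Defs
  imports "HOL-Probability.Probability"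
begin

definition graph :: "'v set \<Rightarrow> 'v set set \<Rightarrow> bool" where
  "graph V E \<longleftrightarrow> (\<forall>e\<in>E. \<exists>u v. u \<noteq> v \<and> u \<in> V \<and> v \<in> V \<and> e = {u, v})"

definition walk_edges :: "'v list \<Rightarrow> 'v set set" where
  "walk_edges xs = set (map (\<lambda>(a, b). {a, b}) (zip xs (tl xs)))"

definition is_path :: "'v set \<Rightarrow> 'v set set \<Rightarrow> 'v list \<Rightarrow> bool" where
  "is_path V E xs \<longleftrightarrow> xs \<noteq> [] \<and> distinct xs \<and> set xs \<subseteq> V \<and> walk_edges xs \<subseteq> E"

definition comp :: "'v set \<Rightarrow> 'v set set \<Rightarrow> 'v \<Rightarrow>  'v set" where
  "comp V E x = {y. \<exists>xs. is_path V E xs \<and> hd xs = x \<and> last xs = y}"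

definition comps :: "'v set \<Rightarrow> 'v set set \<Rightarrow> 'v set set" where
  "comps V E = comp V E ` V"

definition connected_graph :: "'v set \<Rightarrow> 'v set set \<Rightarrow> bool" where
  "connected_graph V E \<longleftrightarrow> V \<noteq> {} \<and> (\<forall>x\<in>V. comp V E x = V)"

definition locally_finite :: "'v set \<Rightarrow> 'v set set \<Rightarrow> bool" where
  "locally_finite V E \<longleftrightarrow> (\<forall>v\<in>V. finite {e\<in>E. v \<in> e})"

definition two_connected :: "'v set \<Rightarrow> 'v set set \<Rightarrow> bool" where
  "two_connected V E \<longleftrightarrow> (\<exists>a b c. a \<in> V \<and> b \<in> V \<and> c \<in> V \<and> distinct [a, b, c]) \<and>
     connected_graph V E \<and> (\<forall>v\<in>V. connected_graph (V - {v}) {e\<in>E. v \<notin> e})"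

definition is_cycle :: "'v set set \<Rightarrow> 'v set set \<Rightarrow> bool" where
  "is_cycle E C \<longleftrightarrow> (\<exists>xs. length xs \<ge> 3 \<and> distinct xs \<and> C = walk_edges (xs @ [hd xs]) \<and> C \<subseteq> E)"

text \<open>A direction of an edge {v,w} is the pair (v,w), read as "from v into w".\<close>
definition Ppath :: "'v set \<Rightarrow> 'v set set \<Rightarrow> 'v set set set \<Rightarrow> 'v set set \<Rightarrow>
    'v \<times> 'v \<Rightarrow> 'v \<times> 'v \<Rightarrow> 'v list \<Rightarrow> bool" where
  "Ppath V E Pc F d1 d2 Q \<longleftrightarrow>
     is_path V (E - F) Q \<and> hd Q = snd d1 \<and> last Q = snd d2 \<and>
     {fst d1, snd d1} \<in> E \<and> {fst d2, snd d2} \<in> E \<and>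
     is_path V E (fst d1 # Q @ [fst d2]) \<and>
     (\<exists>C\<in>Pc. walk_edges (fst d1 # Q @ [fst d2]) \<subseteq> C)"

definition dirs :: "'v set set \<Rightarrow> 'v set \<Rightarrow> ('v \<times> 'v) set" where
  "dirs F D = {(v, z). {v, z} \<in> F \<and> z \<in> D}"

definition F_connected :: "'v set \<Rightarrow> 'v set set \<Rightarrow> 'v set set set \<Rightarrow> 'v set set \<Rightarrow>
    ('v \<times> 'v) set \<Rightarrow> bool" where
  "F_connected V E Pc F J \<longleftrightarrow>
     (\<forall>J1 J2. J1 \<noteq> {} \<and> J2 \<noteq> {} \<and> J1 \<inter> J2 = {} \<and> J1 \<union> J2 = J \<longrightarrow>
        (\<exists>d1\<in>J1. \<exists>d2\<in>J2. \<exists>Q. Ppath V E Pc F d1 d2 Q))"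

definition connects_edge :: "'v set \<Rightarrow> 'v set set \<Rightarrow> 'v set set set \<Rightarrow> 'v set set \<Rightarrow>
    'v set \<Rightarrow> ('v \<times> 'v) set \<Rightarrow> bool" where
  "connects_edge V E Pc F e J \<longleftrightarrow>
     (\<exists>a b. e = {a, b} \<and> (\<exists>d\<in>{(a, b), (b, a)}. \<exists>j\<in>J. \<exists>Q. Ppath V E Pc F d j Q))"

definition interface :: "'v set \<Rightarrow> 'v set set \<Rightarrow> 'v set set set \<Rightarrow> 'v \<Rightarrow> 
    'v set set \<Rightarrow> 'v set set \<Rightarrow> bool" where
  "interface V E Pc x0 P dP \<longleftrightarrow>
     dP \<subseteq> E \<and>
     finite (comp V (E - dP) x0) \<and>
     (\<exists>D. D \<in> comps V (E - dP) \<and> finite D \<and> (\<forall>e\<in>dP. e \<inter> D \<noteq> {}) \<and>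
          (\<forall>D'. D' \<in> comps V (E - dP) \<and> finite D' \<and> (\<forall>e\<in>dP. e \<inter> D' \<noteq> {}) \<longrightarrow> D' = D) \<and>
          F_connected V E Pc dP (dirs dP D) \<and>
          P = {e \<in> E - dP. e \<subseteq> D \<and> connects_edge V E Pc dP e (dirs dP D)})"

definition site_interface :: "'v set \<Rightarrow> 'v set set \<Rightarrow> 'v set set set \<Rightarrow> 'v \<Rightarrow> 
    'v set set \<Rightarrow> 'v set set \<Rightarrow> bool" where
  "site_interface V E Pc x0 P dP \<longleftrightarrow>
     interface V E Pc x0 P dP \<and> (\<forall>e\<in>dP. \<not> e \<subseteq> \<Union>P)"

definition bond_measure :: "'v set set \<Rightarrow> real \<Rightarrow> ('v set \<Rightarrow> bool) measure" where
  "bond_measure E p = PiM E (\<lambda>_. measure_pmf (bernoulli_pmf p))"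

definition site_measure :: "'v set \<Rightarrow> real \<Rightarrow> ('v \<Rightarrow> bool) measure" where
  "site_measure V p = PiM V (\<lambda>_. measure_pmf (bernoulli_pmf p))"

definition ecard :: "'a set \<Rightarrow> ennreal" where
  "ecard S = emeasure (count_space UNIV) S"

definition N_bond :: "'v set \<Rightarrow> 'v set set \<Rightarrow> 'v set set set \<Rightarrow> 'v \<Rightarrow>  nat \<Rightarrow>
    ('v set \<Rightarrow> bool) \<Rightarrow> ennreal" where
  "N_bond V E Pc x0 n \<omega> = ecard {(P, dP). interface V E Pc x0 P dP \<and> card P = n \<and>
       (\<forall>e\<in>P. \<omega> e) \<and> (\<forall>e\<in>dP. \<not> \<omega> e)}"

text \<open>Site-interfaces, identified with the pair of vertex sets (V(P), vertices of dP-edges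
  not incident with any edge of P).\<close>
definition N_site :: "'v set \<Rightarrow> 'v set set \<Rightarrow> 'v set set set \<Rightarrow> 'v \<Rightarrow>  nat \<Rightarrow>
    ('v \<Rightarrow> bool) \<Rightarrow> ennreal" where
  "N_site V E Pc x0 n \<omega> = ecard {(\<Union>P, \<Union>dP - \<Union>P) | P dP. site_interface V E Pc x0 P dP \<and>
       card (\<Union>P) = n \<and> (\<forall>v\<in>\<Union>P. \<omega> v) \<and> (\<forall>v\<in>\<Union>dP - \<Union>P. \<not> \<omega> v)}"

definition EN_bond :: "'v set \<Rightarrow> 'v set set \<Rightarrow> 'v set set set \<Rightarrow> 'v \<Rightarrow>  real \<Rightarrow> nat \<Rightarrow> ennreal" where
  "EN_bond V E Pc x0 p n = (\<integral>\<^sup>+ \<omega>. N_bond V E Pc x0 n \<omega> \<partial>bond_measure E p)"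

definition EN_site :: "'v set \<Rightarrow> 'v set set \<Rightarrow> 'v set set set \<Rightarrow> 'v \<Rightarrow>  real \<Rightarrow> nat \<Rightarrow> ennreal" where
  "EN_site V E Pc x0 p n = (\<integral>\<^sup>+ \<omega>. N_site V E Pc x0 n \<omega> \<partial>site_measure V p)"

definition eroot :: "nat \<Rightarrow> ennreal \<Rightarrow> ereal" where
  "eroot n x = (if x = \<top> then \<infinity> else ereal (root n (enn2real x)))"

definition B_bond :: "'v set \<Rightarrow> 'v set set \<Rightarrow> 'v set set set \<Rightarrow> 'v \<Rightarrow>  real \<Rightarrow> ereal" where
  "B_bond V E Pc x0 p = limsup (\<lambda>n. eroot n (EN_bond V E Pc x0 p n))"

definition B_site :: "'v set \<Rightarrow> 'v set set \<Rightarrow> 'v set set set \<Rightarrow> 'v \<Rightarrow>  real \<Rightarrow> ereal" where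
  "B_site V E Pc x0 p = limsup (\<lambda>n. eroot n (EN_site V E Pc x0 p n))"

definition continuous_on_01 :: "(real \<Rightarrow> ereal) \<Rightarrow> bool" where
  "continuous_on_01 B \<longleftrightarrow> (\<exists>f :: real \<Rightarrow> real. continuous_on {0<..<1} f \<and>
      (\<forall>p\<in>{0<..<1}. B p = ereal (f p)))"

subsection \<open>(a) quasi-transitive planar lattices, vertices placed in the plane (= complex numbers)\<close>

definition translate :: "complex \<Rightarrow> complex \<Rightarrow> complex" where
  "translate t z = z + t"

definition planar_lattice :: "complex set \<Rightarrow> complex set set \<Rightarrow> complex set set set \<Rightarrow> bool" where
  "planar_lattice V E Pc \<longleftrightarrow>
     graph V E \<and> connected_graph V E \<and> locally_finite V E \<and> two_connected V E \<and>
     (\<exists>\<gamma> :: complex set \<Rightarrow> real \<Rightarrow> complex.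
        \<comment> \<open>embedding: edges drawn as arcs between their endvertices, meeting only at common endvertices\<close>
        (\<forall>e\<in>E. arc (\<gamma> e) \<and> e = {pathstart (\<gamma> e), pathfinish (\<gamma> e)} \<and> path_image (\<gamma> e) \<inter> V = e) \<and>
        (\<forall>e\<in>E. \<forall>e'\<in>E. e \<noteq> e' \<longrightarrow> path_image (\<gamma> e) \<inter> path_image (\<gamma> e') \<subseteq> e \<inter> e') \<and>
        \<comment> \<open>preserved by translations by two linearly independent vectors, finitely many vertex orbits\<close>
        (\<exists>a b. independent {a, b} \<and> a \<noteq> b \<and>
           (\<forall>t\<in>{a, b}. translate t ` V = V \<and> (\<lambda>e. translate t ` e) ` E = E \<and>
               (\<forall>e\<in>E. path_image (\<gamma> (translate t ` e)) = translate t ` path_image (\<gamma> e))) \<and>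
           (\<exists>S. finite S \<and> S \<subseteq> V \<and>
              (\<forall>v\<in>V. \<exists>u\<in>S. \<exists>m n :: int. v = u + of_int m * a + of_int n * b))) \<and>
        \<comment> \<open>Pc = the face-boundary cycles\<close>
        Pc = {C. is_cycle E C \<and>
               (\<exists>F\<in>components (- (V \<union> (\<Union>e\<in>E. path_image (\<gamma> e)))).
                   frontier F = (\<Union>e\<in>C. path_image (\<gamma> e)))})"

definition Zd_V :: "nat \<Rightarrow> (nat \<Rightarrow> int) set" where
  "Zd_V d = {x. \<forall>i\<ge>d. x i = 0}"

definition unitv :: "nat \<Rightarrow> nat \<Rightarrow> int" where
  "unitv i = (\<lambda>k. if k = i then 1 else 0)"

definition addv :: "(nat \<Rightarrow> int) \<Rightarrow> (nat \<Rightarrow> int) \<Rightarrow> nat \<Rightarrow> int" where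
  "addv x y = (\<lambda>k. x k + y k)"

definition Zd_E :: "nat \<Rightarrow> (nat \<Rightarrow> int) set set" where
  "Zd_E d = {{x, addv x (unitv i)} | x i. x \<in> Zd_V d \<and> i < d}"

text \<open>4-cycles bounding the square faces of unit cubes.\<close>
definition Zd_P :: "nat \<Rightarrow> (nat \<Rightarrow> int) set set set" where
  "Zd_P d = {{{x, addv x (unitv i)}, {addv x (unitv i), addv (addv x (unitv i)) (unitv j)},
              {addv x (unitv j), addv (addv x (unitv i)) (unitv j)}, {x, addv x (unitv j)}}
             | x i j. x \<in> Zd_V d \<and> i < j \<and> j < d}"

definition Td_E :: "nat \<Rightarrow> (nat \<Rightarrow> int) set set" where
  "Td_E d = Zd_E d \<union> {{x, addv (addv x (unitv i)) (unitv j)} | x i j. x \<in> Zd_V d \<and> i < j \<and> j < d}"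

definition Td_P :: "nat \<Rightarrow> (nat \<Rightarrow> int) set set set" where
  "Td_P d = {C. \<exists>a b c. distinct [a, b, c] \<and> {a, b} \<in> Td_E d \<and> {b, c} \<in> Td_E d \<and>
                 {a, c} \<in> Td_E d \<and> C = {{a, b}, {b, c}, {a, c}}}"

end

theory Submission
  imports Defs
begin

lemma walk_edges_Nil[simp]: "walk_edges [] = {}"
  by (simp add: walk_edges_def)
lemma walk_edges_single[simp]: "walk_edges [x] = {}"
  by (simp add: walk_edges_def)
lemma walk_edges_Cons2[simp]: "walk_edges (x # y # xs) = insert {x, y} (walk_edges (y # xs))"
  by (simp add: walk_edges_def)
lemma walk_edges_append: "walk_edges (xs @ y # ys) = walk_edges (xs @ [y]) \<union> walk_edges (y # ys)"
  by (induction xs rule: induct_list012) auto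
lemma walk_edges_snoc: "walk_edges (xs @ [y]) = (if xs = [] then {} else insert {last xs, y} (walk_edges xs))"
  by (induction xs rule: induct_list012) auto
lemma walk_edges_Cons_sub: "walk_edges zs \<subseteq> walk_edges (a # zs)"
  by (cases zs) auto
lemma walk_edges_suffix: "walk_edges ys \<subseteq> walk_edges (xs @ ys)"
  by (induction xs) (auto intro: walk_edges_Cons_sub[THEN subsetD])
lemma walk_edges_prefix: "walk_edges xs \<subseteq> walk_edges (xs @ ys)"
  by (induction xs rule: induct_list012) auto
lemma walk_edges_sub_set: "e \<in> walk_edges xs \<Longrightarrow> e \<subseteq> set xs"
  by (induction xs rule: induct_list012) auto
lemma walk_edges_mem: "e \<in> walk_edges xs \<Longrightarrow> \<exists>as bs a b. xs = as @ a # b # bs \<and> e = {a, b}"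
proof (induction xs rule: induct_list012)
  case 1 then show ?case by simp
next
  case (2 x) then show ?case by simp
next
  case (3 x y zs)
  show ?case
  proof (cases "e = {x, y}")
    case True
    have "x # y # zs = [] @ x # y # zs \<and> e = {x, y}" using True by simp
    then show ?thesis by (intro exI)
  next
    case False
    then have "e \<in> walk_edges (y # zs)" using "3.prems" by simp
    then have "\<exists>as bs a b. y # zs = as @ a # b # bs \<and> e = {a, b}" by (rule "3.IH"(2))
    then obtain as bs a b where "y # zs = as @ a # b # bs \<and> e = {a, b}" by (elim exE)
    then have "x # y # zs = (x # as) @ a # b # bs \<and> e = {a, b}" by simp
    then show ?thesis by (intro exI)
  qed
qed
lemma walk_edges_memI: "{a, b} \<in> walk_edges (as @ a # b # bs)"
  using walk_edges_suffix[where xs=as and ys="a # b # bs"] by auto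

lemma walk_edges_rev[simp]: "walk_edges (rev xs) = walk_edges xs"
proof -
  have *: "e \<in> walk_edges (rev xs)" if h: "e \<in> walk_edges xs" for e xs
  proof -
    obtain as bs a b where "xs = as @ a # b # bs \<and> e = {a, b}" using walk_edges_mem[OF h] by (elim exE)
    then have "rev xs = rev bs @ b # a # rev as \<and> e = {b, a}" by auto
    then show ?thesis using walk_edges_memI by metis
  qed
  have "walk_edges (rev xs) \<subseteq> walk_edges (rev (rev xs))" using *[of _ "rev xs"] by blast
  then show ?thesis using *[of _ xs] by (simp only: rev_rev_ident) blast
qed

definition walk :: "'v set \<Rightarrow> 'v set set \<Rightarrow> 'v list \<Rightarrow> bool" where
  "walk V E xs \<longleftrightarrow> xs \<noteq> [] \<and> set xs \<subseteq> V \<and> walk_edges xs \<subseteq> E"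

lemma walk_to_path:
  assumes "walk V E xs"
  shows "\<exists>ys. is_path V E ys \<and> hd ys = hd xs \<and> last ys = last xs"
  using assms
proof (induction xs rule: length_induct)
  case (1 xs)
  note prems = "1.prems" and IH = "1.IH"
  show ?case
  proof (cases "distinct xs")
    case True
    then have "is_path V E xs \<and> hd xs = hd xs \<and> last xs = last xs" using prems by (simp add: walk_def is_path_def)
    then show ?thesis by (intro exI)
  next
    case False
    obtain as y bs cs where xs: "xs = as @ [y] @ bs @ [y] @ cs"
      using not_distinct_decomp[OF False] by metis
    let ?ys = "as @ [y] @ cs"
    have we: "walk_edges ?ys \<subseteq> walk_edges xs"
    proof -
      have "walk_edges ?ys = walk_edges (as @ [y]) \<union> walk_edges (y # cs)"
        using walk_edges_append[of as y cs] by simp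
      moreover have "walk_edges (as @ [y]) \<subseteq> walk_edges ((as @ [y]) @ (bs @ [y] @ cs))"
        by (rule walk_edges_prefix)
      moreover have "walk_edges (y # cs) \<subseteq> walk_edges ((as @ [y] @ bs) @ (y # cs))"
        by (rule walk_edges_suffix)
      ultimately show ?thesis unfolding xs by simp
    qed
    have "set ?ys \<subseteq> set xs" unfolding xs by auto
    then have w: "walk V E ?ys" using prems we unfolding walk_def by auto
    have l: "length ?ys < length xs" using xs by simp
    have "\<exists>zs. is_path V E zs \<and> hd zs = hd ?ys \<and> last zs = last ?ys"
      by (rule mp[OF mp[OF spec[OF IH, of "?ys"] l] w])
    then obtain zs where zs: "is_path V E zs \<and> hd zs = hd ?ys \<and> last zs = last ?ys"
      by (elim exE)
    moreover have "hd ?ys = hd xs" using xs by (cases as) simp_all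
    moreover have "last ?ys = last xs" using xs by (cases cs) simp_all
    ultimately have "is_path V E zs \<and> hd zs = hd xs \<and> last zs = last xs" by simp
    then show ?thesis by (intro exI)
  qed
qed

lemma path_walk: "is_path V E xs \<Longrightarrow> walk V E xs"
  by (simp add: is_path_def walk_def)

lemma comp_iff: "y \<in> comp V E x \<longleftrightarrow> (\<exists>xs. walk V E xs \<and> hd xs = x \<and> last xs = y)"
proof
  assume "y \<in> comp V E x"
  then obtain xs where "is_path V E xs \<and> hd xs = x \<and> last xs = y" unfolding comp_def mem_Collect_eq by (elim exE)
  then have "walk V E xs \<and> hd xs = x \<and> last xs = y" using path_walk by blast
  then show "\<exists>xs. walk V E xs \<and> hd xs = x \<and> last xs = y" by (intro exI)
next
  assume "\<exists>xs. walk V E xs \<and> hd xs = x \<and> last xs = y"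
  then obtain xs where xs: "walk V E xs \<and> hd xs = x \<and> last xs = y" by (elim exE)
  then obtain ys where "is_path V E ys \<and> hd ys = hd xs \<and> last ys = last xs"
    using walk_to_path by metis
  then have "is_path V E ys \<and> hd ys = x \<and> last ys = y" using xs by simp
  then show "y \<in> comp V E x" unfolding comp_def mem_Collect_eq by (intro exI)
qed

lemma walk_append:
  assumes "walk V E xs" "walk V E ys" "last xs = hd ys"
  shows "walk V E (xs @ tl ys)" "hd (xs @ tl ys) = hd xs" "last (xs @ tl ys) = last ys"
proof -
  obtain y ys' where ys: "ys = y # ys'" using assms(2) by (cases ys) (auto simp: walk_def)
  have ne: "xs \<noteq> []" using assms(1) by (simp add: walk_def)
  then obtain xs' where xs: "xs = xs' @ [y]" using assms(3) ys by (metis append_butlast_last_id list.sel(1))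
  have e: "xs @ tl ys = xs' @ y # ys'" using xs ys by simp
  have "walk_edges (xs @ tl ys) = walk_edges xs \<union> walk_edges ys"
    unfolding e by (simp add: xs ys walk_edges_append[of xs' y ys'])
  moreover have "set (xs @ tl ys) \<subseteq> set xs \<union> set ys" unfolding e xs ys by auto
  ultimately show "walk V E (xs @ tl ys)" using assms(1,2) unfolding walk_def e by auto
  show "hd (xs @ tl ys) = hd xs" using ne by simp
  show "last (xs @ tl ys) = last ys" unfolding e ys using xs by (cases ys') simp_all
qed

lemma walk_rev: "walk V E xs \<Longrightarrow> walk V E (rev xs)"
  by (auto simp: walk_def)

lemma comp_refl: "x \<in> V \<Longrightarrow> x \<in> comp V E x"
proof -
  assume "x \<in> V"
  then have "walk V E [x] \<and> hd [x] = x \<and> last [x] = x" by (simp add: walk_def)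
  then show ?thesis unfolding comp_iff by (intro exI)
qed

lemma walk_last_in: "walk V E xs \<Longrightarrow> last xs \<in> V"
  by (auto simp: walk_def)
lemma walk_hd_in: "walk V E xs \<Longrightarrow> hd xs \<in> V"
  by (auto simp: walk_def)

lemma comp_sub: "comp V E x \<subseteq> V"
proof
  fix z assume "z \<in> comp V E x"
  then obtain xs where "walk V E xs \<and> hd xs = x \<and> last xs = z" unfolding comp_iff by (elim exE)
  then show "z \<in> V" using walk_last_in by metis
qed

lemma comp_trans: "y \<in> comp V E x \<Longrightarrow> z \<in> comp V E y \<Longrightarrow> z \<in> comp V E x"
proof -
  assume "y \<in> comp V E x" "z \<in> comp V E y"
  then obtain xs where a: "walk V E xs \<and> hd xs = x \<and> last xs = y"
    unfolding comp_iff by (elim exE)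
  obtain ys where b: "walk V E ys \<and> hd ys = y \<and> last ys = z"
    using \<open>z \<in> comp V E y\<close> unfolding comp_iff by (elim exE)
  have "walk V E (xs @ tl ys) \<and> hd (xs @ tl ys) = x \<and> last (xs @ tl ys) = z"
    using a b walk_append[of V E xs ys] by simp
  then show ?thesis unfolding comp_iff by (intro exI)
qed

lemma comp_sym: "y \<in> comp V E x \<Longrightarrow> x \<in> comp V E y"
proof -
  assume "y \<in> comp V E x"
  then obtain xs where a: "walk V E xs \<and> hd xs = x \<and> last xs = y" unfolding comp_iff by (elim exE)
  then have "walk V E (rev xs) \<and> hd (rev xs) = y \<and> last (rev xs) = x"
    using a walk_rev[of V E xs] by (simp add: hd_rev last_rev)
  then show ?thesis unfolding comp_iff by (intro exI)
qed

lemma comp_eq: "y \<in> comp V E x \<Longrightarrow> comp V E y = comp V E x"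
proof (rule set_eqI, rule iffI)
  fix z assume "y \<in> comp V E x" "z \<in> comp V E y" then show "z \<in> comp V E x" by (rule comp_trans)
next
  fix z assume "y \<in> comp V E x" "z \<in> comp V E x" then show "z \<in> comp V E y"
    using comp_trans comp_sym by metis
qed

lemma comp_edge:
  assumes "y \<in> comp V E x" "{y, z} \<in> E" "z \<in> V"
  shows "z \<in> comp V E x"
proof -
  have "y \<in> V" using comp_sub assms(1) by (rule subsetD)
  then have "walk V E [y, z] \<and> hd [y, z] = y \<and> last [y, z] = z" using assms(2,3) by (simp add: walk_def)
  then have "z \<in> comp V E y" unfolding comp_iff by (intro exI)
  with assms(1) show ?thesis by (rule comp_trans)
qed

lemma walk_in_comp:
  assumes "walk V E xs" "hd xs \<in> comp V E x"
  shows "set xs \<subseteq> comp V E x"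
proof
  fix z assume "z \<in> set xs"
  then obtain as bs where xs: "xs = as @ z # bs" by (meson split_list)
  have xs': "xs = (as @ [z]) @ bs" using xs by simp
  have "walk_edges (as @ [z]) \<subseteq> walk_edges ((as @ [z]) @ bs)" by (rule walk_edges_prefix)
  then have "walk_edges (as @ [z]) \<subseteq> walk_edges xs" unfolding xs' .
  moreover have "set (as @ [z]) \<subseteq> set xs" unfolding xs' by auto
  ultimately have "walk V E (as @ [z])" using assms(1) unfolding walk_def by blast
  moreover have "hd (as @ [z]) = hd xs" using xs by (cases as) simp_all
  ultimately have "walk V E (as @ [z]) \<and> hd (as @ [z]) = hd xs \<and> last (as @ [z]) = z" by simp
  then have "z \<in> comp V E (hd xs)" unfolding comp_iff by (intro exI)
  then show "z \<in> comp V E x" using assms(2) comp_trans by metis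
qed


lemma is_path_suffix:
  assumes "is_path V E (xs @ ys)" "ys \<noteq> []"
  shows "is_path V E ys"
proof -
  have "walk_edges ys \<subseteq> walk_edges (xs @ ys)" by (rule walk_edges_suffix)
  then show ?thesis using assms unfolding is_path_def by auto
qed

lemma comps_D:
  assumes "D \<in> comps V E'" "z \<in> D"
  shows "D = comp V E' z"
proof -
  obtain y where y: "D = comp V E' y" using assms(1) unfolding comps_def by blast
  then have "z \<in> comp V E' y" using assms(2) by simp
  then have "comp V E' z = comp V E' y" by (rule comp_eq)
  then show ?thesis using y by simp
qed

lemma comps_sub: "D \<in> comps V E' \<Longrightarrow> D \<subseteq> V"
proof -
  assume "D \<in> comps V E'"
  then obtain y where y: "D = comp V E' y" unfolding comps_def by blast
  show ?thesis unfolding y by (rule comp_sub)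
qed

lemma Q_edges_in_P:
  assumes D: "D \<in> comps V (E - dP)"
    and P: "P = {e \<in> E - dP. e \<subseteq> D \<and> connects_edge V E Pc dP e (dirs dP D)}"
    and pp: "Ppath V E Pc dP d j Q" and j: "j \<in> dirs dP D" and dD: "snd d \<in> D"
  shows "walk_edges Q \<subseteq> P"
proof
  fix e assume e: "e \<in> walk_edges Q"
  obtain as bs a b where Q: "Q = as @ a # b # bs \<and> e = {a, b}" using walk_edges_mem[OF e] by (elim exE)
  note ppd = pp[unfolded Ppath_def]
  have pQ: "is_path V (E - dP) Q" using ppd by (elim conjE)
  have hQ: "hd Q = snd d" using ppd by (elim conjE)
  have lQ: "last Q = snd j" using ppd by (elim conjE)
  have ej: "{fst j, snd j} \<in> E" using ppd by (elim conjE)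
  have pL: "is_path V E (fst d # Q @ [fst j])" using ppd by (elim conjE)
  have C: "\<exists>C\<in>Pc. walk_edges (fst d # Q @ [fst j]) \<subseteq> C" using ppd by (elim conjE)
  have eE: "e \<in> E - dP" using pQ e unfolding is_path_def by blast
  have "D = comp V (E - dP) (snd d)" using comps_D[OF D dD] .
  moreover have "hd Q \<in> comp V (E - dP) (snd d)" using hQ dD \<open>D = comp V (E - dP) (snd d)\<close> by simp
  ultimately have "set Q \<subseteq> D" using walk_in_comp[OF path_walk[OF pQ]] by simp
  then have eD: "e \<subseteq> D" using walk_edges_sub_set[OF e] by blast
  let ?Q' = "b # bs"
  have L: "fst d # Q @ [fst j] = (fst d # as) @ (a # ?Q' @ [fst j])" using Q by simp
  have p1: "is_path V (E - dP) ?Q'" using is_path_suffix[of V "E - dP" "as @ [a]" ?Q'] pQ Q by simp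
  have p2: "is_path V E (a # ?Q' @ [fst j])" using is_path_suffix[of V E "fst d # as" "a # ?Q' @ [fst j]"] pL L by simp
  have w2: "walk_edges (a # ?Q' @ [fst j]) \<subseteq> walk_edges (fst d # Q @ [fst j])"
    unfolding L by (rule walk_edges_suffix)
  have l': "last ?Q' = snd j" using lQ Q by simp
  have eab: "{fst (a, b), snd (a, b)} \<in> E" using eE Q by simp
  obtain C0 where C0: "C0 \<in> Pc" "walk_edges (fst d # Q @ [fst j]) \<subseteq> C0" using C by blast
  have "walk_edges (fst (a, b) # ?Q' @ [fst j]) \<subseteq> C0" using subset_trans[OF w2 C0(2)] by simp
  then have "Ppath V E Pc dP (a, b) j ?Q'"
    unfolding Ppath_def using p1 p2 l' eab ej C0(1) by auto
  then have "\<exists>Q. Ppath V E Pc dP (a, b) j Q" by (rule exI)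
  then have "\<exists>d\<in>{(a, b), (b, a)}. \<exists>j\<in>dirs dP D. \<exists>Q. Ppath V E Pc dP d j Q" using j by blast
  then have "connects_edge V E Pc dP e (dirs dP D)"
    unfolding connects_edge_def using Q by (intro exI[where x=a] exI[where x=b]) simp
  then show "e \<in> P" unfolding P using eE eD by simp
qed


lemma edge_other:
  assumes "graph V E" "e \<in> E" "z \<in> e"
  shows "\<exists>v. e = {v, z} \<and> v \<noteq> z \<and> v \<in> V \<and> z \<in> V"
proof -
  have "\<exists>u w. u \<noteq> w \<and> u \<in> V \<and> w \<in> V \<and> e = {u, w}" using assms(1,2) unfolding graph_def by (rule bspec)
  then obtain u w where uw: "u \<noteq> w" "u \<in> V" "w \<in> V" "e = {u, w}" by (elim exE conjE)
  show ?thesis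
  proof (cases "z = u")
    case True
    then have "e = {w, z} \<and> w \<noteq> z \<and> w \<in> V \<and> z \<in> V" using uw by (simp add: insert_commute)
    then show ?thesis by (rule exI)
  next
    case False
    then have "z = w" using uw assms(3) by simp
    then have "e = {u, z} \<and> u \<noteq> z \<and> u \<in> V \<and> z \<in> V" using uw by simp
    then show ?thesis by (rule exI)
  qed
qed

lemma edge_card: "graph V E \<Longrightarrow> e \<in> E \<Longrightarrow> card e = 2 \<and> finite e"
proof -
  assume "graph V E" "e \<in> E"
  then have "\<exists>u w. u \<noteq> w \<and> u \<in> V \<and> w \<in> V \<and> e = {u, w}" unfolding graph_def by (rule bspec)
  then obtain u w where uw: "u \<noteq> w" "e = {u, w}" by (elim exE conjE)
  then show ?thesis by simp
qed

lemma interface_unfold: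
  assumes "interface V E Pc x0 P dP"
  obtains D where "D \<in> comps V (E - dP)" "finite D" "\<forall>e\<in>dP. e \<inter> D \<noteq> {}"
    "F_connected V E Pc dP (dirs dP D)"
    "P = {e \<in> E - dP. e \<subseteq> D \<and> connects_edge V E Pc dP e (dirs dP D)}"
    "dP \<subseteq> E" "finite (comp V (E - dP) x0)"
    "\<forall>D'. D' \<in> comps V (E - dP) \<and> finite D' \<and> (\<forall>e\<in>dP. e \<inter> D' \<noteq> {}) \<longrightarrow> D' = D"
  using assms unfolding interface_def apply (elim conjE exE) apply (rule that) apply assumption+ done

lemma interface_Z_sub:
  assumes G: "graph V E" and I: "interface V E Pc x0 P dP"
    and D: "D \<in> comps V (E - dP)" "\<forall>e\<in>dP. e \<inter> D \<noteq> {}" "F_connected V E Pc dP (dirs dP D)"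
      "P = {e \<in> E - dP. e \<subseteq> D \<and> connects_edge V E Pc dP e (dirs dP D)}" "dP \<subseteq> E"
    and z: "z \<in> D \<inter> \<Union>dP" and z': "z' \<in> D \<inter> \<Union>dP" "z' \<noteq> z"
  shows "z \<in> \<Union>P"
proof -
  obtain e where e: "e \<in> dP" "z \<in> e" using z by blast
  have "e \<in> E" using e(1) D(5) by (rule subsetD[rotated])
  then obtain v where v: "e = {v, z}" using edge_other[OF G \<open>e \<in> E\<close> e(2)] by (elim exE conjE)
  have d1: "(v, z) \<in> dirs dP D" unfolding dirs_def using e(1) v z by simp
  obtain e' where e': "e' \<in> dP" "z' \<in> e'" using z' by blast
  have "e' \<in> E" using e'(1) D(5) by (rule subsetD[rotated])
  then obtain v' where v': "e' = {v', z'}" using edge_other[OF G \<open>e' \<in> E\<close> e'(2)] by (elim exE conjE)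
  have d2: "(v', z') \<in> dirs dP D" unfolding dirs_def using e'(1) v' z' by simp
  let ?J1 = "{d \<in> dirs dP D. snd d = z}" and ?J2 = "{d \<in> dirs dP D. snd d \<noteq> z}"
  have "?J1 \<noteq> {}" using d1 by auto
  moreover have "?J2 \<noteq> {}" using d2 z' by auto
  ultimately have H: "?J1 \<noteq> {} \<and> ?J2 \<noteq> {} \<and> ?J1 \<inter> ?J2 = {} \<and> ?J1 \<union> ?J2 = dirs dP D" by auto
  have "\<exists>d1\<in>?J1. \<exists>d2\<in>?J2. \<exists>Q. Ppath V E Pc dP d1 d2 Q"
    using mp[OF spec[OF spec[OF D(3)[unfolded F_connected_def], of ?J1], of ?J2] H] .
  then obtain d j Q where dj: "d \<in> ?J1" "j \<in> ?J2" and pp: "Ppath V E Pc dP d j Q"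
    by blast
  have jD: "j \<in> dirs dP D" using dj by simp
  have dD: "snd d \<in> D" using dj(1) unfolding dirs_def by auto
  have WQ: "walk_edges Q \<subseteq> P" by (rule Q_edges_in_P[OF D(1) D(4) pp jD dD])
  have pQ: "is_path V (E - dP) Q" using pp unfolding Ppath_def by (elim conjE)
  have hQ: "hd Q = snd d" using pp unfolding Ppath_def by (elim conjE)
  have lQ: "last Q = snd j" using pp unfolding Ppath_def by (elim conjE)
  have Qne: "Q \<noteq> []" using pQ unfolding is_path_def by simp
  have "hd Q = z" using hQ dj by simp
  moreover have "last Q \<noteq> z" using lQ dj by simp
  ultimately obtain q rest where Q: "Q = z # q # rest"
  proof -
    assume th: "\<And>q rest. Q = z # q # rest \<Longrightarrow> thesis"
    obtain z0 Q1 where Q0: "Q = z0 # Q1" using Qne by (cases Q) auto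
    have "z0 = z" using Q0 \<open>hd Q = z\<close> by simp
    have "Q1 \<noteq> []" using Q0 \<open>last Q \<noteq> z\<close> \<open>z0 = z\<close> by auto
    then obtain q rest where "Q1 = q # rest" by (cases Q1) auto
    then show thesis using th Q0 \<open>z0 = z\<close> by simp
  qed
  have "{z, q} \<in> walk_edges Q" unfolding Q by simp
  then have "{z, q} \<in> P" using WQ by blast
  then show ?thesis by blast
qed

lemma interface_bound:
  assumes G: "graph V E" and deg: "\<forall>v\<in>V. finite {e\<in>E. v \<in> e} \<and> card {e\<in>E. v \<in> e} \<le> \<Delta>"
    and I: "interface V E Pc x0 P dP"
  shows "finite P \<and> finite dP \<and> card dP \<le> \<Delta> * (2 * card P + 1)"
proof -
  obtain D where D: "D \<in> comps V (E - dP)" "finite D" "\<forall>e\<in>dP. e \<inter> D \<noteq> {}"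
    "F_connected V E Pc dP (dirs dP D)"
    "P = {e \<in> E - dP. e \<subseteq> D \<and> connects_edge V E Pc dP e (dirs dP D)}"
    "dP \<subseteq> E" "finite (comp V (E - dP) x0)"
    "\<forall>D'. D' \<in> comps V (E - dP) \<and> finite D' \<and> (\<forall>e\<in>dP. e \<inter> D' \<noteq> {}) \<longrightarrow> D' = D"
    by (rule interface_unfold[OF I])
  have DV: "D \<subseteq> V" using comps_sub[OF D(1)] .
  have PD: "P \<subseteq> Pow D" unfolding D(5) by blast
  have finP: "finite P" using PD D(2) by (rule finite_subset[OF _ finite_Pow_iff[THEN iffD2]])
  have UPD: "\<Union>P \<subseteq> D" using PD by blast
  have finUP: "finite (\<Union>P)" using UPD D(2) by (rule finite_subset)
  define Z where "Z = D \<inter> \<Union>dP"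
  have finZ: "finite Z" unfolding Z_def using D(2) by simp
  have ZV: "Z \<subseteq> V" unfolding Z_def using DV by blast
  have sub: "dP \<subseteq> (\<Union>z\<in>Z. {e\<in>E. z \<in> e})"
  proof
    fix e assume e: "e \<in> dP"
    then obtain z where "z \<in> e" "z \<in> D" using D(3) by blast
    moreover have "e \<in> E" using e D(6) by (rule subsetD[rotated])
    ultimately show "e \<in> (\<Union>z\<in>Z. {e\<in>E. z \<in> e})" unfolding Z_def using e by blast
  qed
  have fin1: "\<forall>z\<in>Z. finite {e\<in>E. z \<in> e}"
  proof
    fix z assume "z \<in> Z" then have "z \<in> V" using ZV by (rule subsetD[rotated])
    then show "finite {e\<in>E. z \<in> e}" using deg by simp
  qed
  have finU: "finite (\<Union>z\<in>Z. {e\<in>E. z \<in> e})" using finZ fin1 by simp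
  have finDP: "finite dP" using finU sub by (rule finite_subset[rotated])
  have "card dP \<le> card (\<Union>z\<in>Z. {e\<in>E. z \<in> e})" using finU sub by (rule card_mono)
  also have "\<dots> \<le> (\<Sum>z\<in>Z. card {e\<in>E. z \<in> e})" by (rule card_UN_le[OF finZ])
  also have "\<dots> \<le> (\<Sum>z\<in>Z. \<Delta>)"
  proof (rule sum_mono)
    fix z assume "z \<in> Z" then have "z \<in> V" using ZV by (rule subsetD[rotated])
    then show "card {e\<in>E. z \<in> e} \<le> \<Delta>" using deg by simp
  qed
  also have "\<dots> = card Z * \<Delta>" by simp
  finally have c1: "card dP \<le> card Z * \<Delta>" .
  have "card Z \<le> 2 * card P + 1"
  proof (cases "card Z \<le> 1")
    case True then show ?thesis by simp
  next
    case False
    have "Z \<subseteq> \<Union>P"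
    proof
      fix z assume zZ: "z \<in> Z"
      obtain z' where z': "z' \<in> Z" "z' \<noteq> z"
      proof -
        have "\<not> Z \<subseteq> {z}"
        proof
          assume "Z \<subseteq> {z}"
          then have "card Z \<le> card {z}" by (intro card_mono) simp_all
          then show False using False by simp
        qed
        then show ?thesis using that by blast
      qed
      have zz: "z \<in> D \<inter> \<Union>dP" "z' \<in> D \<inter> \<Union>dP" using zZ z'(1) unfolding Z_def by simp_all
      show "z \<in> \<Union>P"
        by (rule interface_Z_sub[OF G I D(1,3,4,5,6) zz z'(2)])
    qed
    then have "card Z \<le> card (\<Union>P)" using finUP by (intro card_mono)
    also have "\<dots> \<le> (\<Sum>e\<in>P. card e)" by (rule card_Union_le_sum_card)
    also have "\<dots> = (\<Sum>e\<in>P. 2)"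
    proof (rule sum.cong)
      fix e assume "e \<in> P"
      then have "e \<in> E" unfolding D(5) by simp
      then show "card e = 2" using edge_card[OF G] by simp
    qed simp
    finally show ?thesis by simp
  qed
  then have "card Z * \<Delta> \<le> (2 * card P + 1) * \<Delta>" by (rule mult_le_mono1)
  then have "card dP \<le> (2 * card P + 1) * \<Delta>" using c1 by (rule le_trans[rotated])
  then show ?thesis using finP finDP by (simp add: mult.commute)
qed


definition econn :: "'v set set \<Rightarrow> bool" where
  "econn S \<longleftrightarrow> (\<forall>S1 S2. S1 \<union> S2 = S \<and> S1 \<inter> S2 = {} \<and> S1 \<noteq> {} \<and> S2 \<noteq> {} \<longrightarrow>
      (\<exists>e1\<in>S1. \<exists>e2\<in>S2. e1 \<inter> e2 \<noteq> {}))"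

lemma walk_propagate:
  assumes "walk_edges xs \<subseteq> S1 \<union> S2" "xs \<noteq> []" "hd xs \<in> \<Union>S1"
    and nt: "\<forall>e1\<in>S1. \<forall>e2\<in>S2. e1 \<inter> e2 = {}"
  shows "last xs \<in> \<Union>S1"
  using assms(1-3)
proof (induction xs rule: induct_list012)
  case (3 x y zs)
  have "{x, y} \<in> S1 \<union> S2" using "3.prems"(1) by simp
  moreover have "{x, y} \<notin> S2"
  proof
    assume "{x, y} \<in> S2"
    obtain e1 where "e1 \<in> S1" "x \<in> e1" using "3.prems"(3) by auto
    then show False using nt \<open>{x, y} \<in> S2\<close> by blast
  qed
  ultimately have "{x, y} \<in> S1" by blast
  then have "y \<in> \<Union>S1" by blast
  moreover have "walk_edges (y # zs) \<subseteq> S1 \<union> S2" using "3.prems"(1) by simp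
  ultimately have "last (y # zs) \<in> \<Union>S1" using "3.IH"(2) by simp
  then show ?case by simp
qed auto

lemma Ppath_propagate:
  assumes "Ppath V E Pc F d j Q" "walk_edges Q \<subseteq> S1 \<union> S2" "{fst d, snd d} \<in> S1"
    "{fst j, snd j} \<in> S1 \<union> S2" "\<forall>e1\<in>S1. \<forall>e2\<in>S2. e1 \<inter> e2 = {}"
  shows "{fst j, snd j} \<in> S1"
proof -
  have pQ: "is_path V (E - F) Q" using assms(1) unfolding Ppath_def by (elim conjE)
  have hQ: "hd Q = snd d" using assms(1) unfolding Ppath_def by (elim conjE)
  have lQ: "last Q = snd j" using assms(1) unfolding Ppath_def by (elim conjE)
  have ne: "Q \<noteq> []" using pQ unfolding is_path_def by simp
  have "hd Q \<in> \<Union>S1" using hQ assms(3) by blast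
  then have "last Q \<in> \<Union>S1" using walk_propagate[OF assms(2) ne _ assms(5)] by simp
  then have "snd j \<in> \<Union>S1" using lQ by simp
  then obtain e1 where "e1 \<in> S1" "snd j \<in> e1" by blast
  then have "{fst j, snd j} \<notin> S2" using assms(5) by blast
  then show ?thesis using assms(4) by blast
qed

lemma dirs_edge: "j \<in> dirs dP D \<Longrightarrow> {fst j, snd j} \<in> dP \<and> snd j \<in> D"
  unfolding dirs_def by auto

lemma econn_part_dir:
  assumes G: "graph V E"
    and D: "D \<in> comps V (E - dP)" "\<forall>e\<in>dP. e \<inter> D \<noteq> {}"
      "P = {e \<in> E - dP. e \<subseteq> D \<and> connects_edge V E Pc dP e (dirs dP D)}" "dP \<subseteq> E"
    and S: "S1 \<union> S2 = P \<union> dP" and nt: "\<forall>e1\<in>S1. \<forall>e2\<in>S2. e1 \<inter> e2 = {}"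
    and e: "e \<in> S1"
  shows "\<exists>j\<in>dirs dP D. {fst j, snd j} \<in> S1"
proof (cases "e \<in> dP")
  case True
  then obtain z where z: "z \<in> e" "z \<in> D" using D(2) by blast
  have "e \<in> E" using True D(4) by (rule subsetD[rotated])
  then obtain v where v: "e = {v, z}" using edge_other[OF G \<open>e \<in> E\<close> z(1)] by (elim exE conjE)
  have "(v, z) \<in> dirs dP D" unfolding dirs_def using True v z by simp
  moreover have "{fst (v, z), snd (v, z)} \<in> S1" using e v by simp
  ultimately show ?thesis by blast
next
  case False
  then have eP: "e \<in> P" using S e by blast
  then have ce: "connects_edge V E Pc dP e (dirs dP D)" and eD: "e \<subseteq> D" unfolding D(3) by simp_all
  then obtain a b d j Q where ab: "e = {a, b}" and d: "d \<in> {(a, b), (b, a)}" and j: "j \<in> dirs dP D"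
    and pp: "Ppath V E Pc dP d j Q"
    unfolding connects_edge_def by blast
  have ed: "{fst d, snd d} = e" using d ab by auto
  have "snd d \<in> D" using ed eD by blast
  then have "walk_edges Q \<subseteq> P" by (rule Q_edges_in_P[OF D(1) D(3) pp j])
  then have "walk_edges Q \<subseteq> S1 \<union> S2" using S by blast
  moreover have "{fst j, snd j} \<in> S1 \<union> S2" using dirs_edge[OF j] S by blast
  ultimately have "{fst j, snd j} \<in> S1" using Ppath_propagate[OF pp _ _ _ nt] ed e by simp
  then show ?thesis using j by blast
qed

lemma interface_econn:
  assumes G: "graph V E" and I: "interface V E Pc x0 P dP"
  shows "econn (P \<union> dP)"
  unfolding econn_def
proof (intro allI impI)
  fix S1 S2 assume H: "S1 \<union> S2 = P \<union> dP \<and> S1 \<inter> S2 = {} \<and> S1 \<noteq> {} \<and> S2 \<noteq> {}"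
  obtain D where D: "D \<in> comps V (E - dP)" "finite D" "\<forall>e\<in>dP. e \<inter> D \<noteq> {}"
    "F_connected V E Pc dP (dirs dP D)"
    "P = {e \<in> E - dP. e \<subseteq> D \<and> connects_edge V E Pc dP e (dirs dP D)}"
    "dP \<subseteq> E" "finite (comp V (E - dP) x0)"
    "\<forall>D'. D' \<in> comps V (E - dP) \<and> finite D' \<and> (\<forall>e\<in>dP. e \<inter> D' \<noteq> {}) \<longrightarrow> D' = D"
    by (rule interface_unfold[OF I])
  show "\<exists>e1\<in>S1. \<exists>e2\<in>S2. e1 \<inter> e2 \<noteq> {}"
  proof (rule ccontr)
    assume "\<not> (\<exists>e1\<in>S1. \<exists>e2\<in>S2. e1 \<inter> e2 \<noteq> {})"
    then have nt: "\<forall>e1\<in>S1. \<forall>e2\<in>S2. e1 \<inter> e2 = {}" by blast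
    then have nt': "\<forall>e1\<in>S2. \<forall>e2\<in>S1. e1 \<inter> e2 = {}" by blast
    have S: "S1 \<union> S2 = P \<union> dP" and S': "S2 \<union> S1 = P \<union> dP" using H by auto
    obtain e1 where "e1 \<in> S1" using H by blast
    then have j1: "\<exists>j\<in>dirs dP D. {fst j, snd j} \<in> S1"
      by (rule econn_part_dir[OF G D(1,3,5,6) S nt])
    obtain e2 where "e2 \<in> S2" using H by blast
    then have j2: "\<exists>j\<in>dirs dP D. {fst j, snd j} \<in> S2"
      by (rule econn_part_dir[OF G D(1,3,5,6) S' nt'])
    let ?J1 = "{j \<in> dirs dP D. {fst j, snd j} \<in> S1}" and ?J2 = "{j \<in> dirs dP D. {fst j, snd j} \<in> S2}"
    have HJ: "?J1 \<noteq> {} \<and> ?J2 \<noteq> {} \<and> ?J1 \<inter> ?J2 = {} \<and> ?J1 \<union> ?J2 = dirs dP D"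
    proof (intro conjI)
      show "?J1 \<noteq> {}" using j1 by blast
      show "?J2 \<noteq> {}" using j2 by blast
      show "?J1 \<inter> ?J2 = {}" using H by blast
      show "?J1 \<union> ?J2 = dirs dP D"
      proof
        show "?J1 \<union> ?J2 \<subseteq> dirs dP D" by blast
        show "dirs dP D \<subseteq> ?J1 \<union> ?J2"
        proof
          fix j assume "j \<in> dirs dP D"
          then have "{fst j, snd j} \<in> S1 \<union> S2" using dirs_edge S by blast
          then show "j \<in> ?J1 \<union> ?J2" using \<open>j \<in> dirs dP D\<close> by blast
        qed
      qed
    qed
    have "\<exists>d1\<in>?J1. \<exists>d2\<in>?J2. \<exists>Q. Ppath V E Pc dP d1 d2 Q"
      using mp[OF spec[OF spec[OF D(4)[unfolded F_connected_def], of ?J1], of ?J2] HJ] .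
    then obtain d j Q where dj: "d \<in> ?J1" "j \<in> ?J2" and pp: "Ppath V E Pc dP d j Q"
      by blast
    have jd: "j \<in> dirs dP D" using dj by simp
    have "snd d \<in> D" using dj dirs_edge by blast
    then have "walk_edges Q \<subseteq> P" by (rule Q_edges_in_P[OF D(1) D(5) pp jd])
    then have "walk_edges Q \<subseteq> S1 \<union> S2" using S by blast
    moreover have "{fst d, snd d} \<in> S1" using dj by simp
    moreover have "{fst j, snd j} \<in> S1 \<union> S2" using dj by simp
    ultimately have "{fst j, snd j} \<in> S1" using Ppath_propagate[OF pp _ _ _ nt] by simp
    moreover have "{fst j, snd j} \<in> S2" using dj by simp
    ultimately show False using H by blast
  qed
qed


fun rchain :: "('a \<Rightarrow> 'a \<Rightarrow> bool) \<Rightarrow> 'a list \<Rightarrow> bool" where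
  "rchain R [] = True"
| "rchain R [x] = True"
| "rchain R (x # y # xs) = (R x y \<and> rchain R (y # xs))"

lemma rchain_append: "rchain R (xs @ y # ys) \<longleftrightarrow> rchain R (xs @ [y]) \<and> rchain R (y # ys)"
  by (induction xs rule: induct_list012) auto

lemma rchain_snoc: "xs \<noteq> [] \<Longrightarrow> rchain R (xs @ [y]) \<longleftrightarrow> rchain R xs \<and> R (last xs) y"
  by (induction xs rule: induct_list012) auto

lemma rchain_insert:
  assumes "rchain R (A @ y # B)" "R y x" "R x y"
  shows "rchain R (A @ y # x # y # B)"
proof -
  have "rchain R (A @ [y]) \<and> rchain R (y # B)" using assms(1) rchain_append[of R A y B] by simp
  then have "rchain R (A @ [y]) \<and> rchain R (y # x # y # B)" using assms(2,3) by simp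
  then show ?thesis using rchain_append[of R A y "x # y # B"] by simp
qed

definition adj :: "'v set \<Rightarrow> 'v set \<Rightarrow> bool" where
  "adj e f \<longleftrightarrow> e \<inter> f \<noteq> {}"

lemma econn_cover_k:
  assumes "econn S" "finite S" "r \<in> S"
  shows "k < card S \<Longrightarrow> \<exists>W. W \<noteq> [] \<and> hd W = r \<and> set W \<subseteq> S \<and> card (set W) = Suc k \<and> rchain adj W \<and> length W \<le> 2 * k + 1"
proof (induction k)
  case 0
  have "[r] \<noteq> [] \<and> hd [r] = r \<and> set [r] \<subseteq> S \<and> card (set [r]) = Suc 0 \<and> rchain adj [r] \<and> length [r] \<le> 2 * 0 + 1"
    using assms(3) by simp
  then show ?case by (rule exI)
next
  case (Suc k)
  have "k < card S" using Suc.prems by simp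
  then have "\<exists>W. W \<noteq> [] \<and> hd W = r \<and> set W \<subseteq> S \<and> card (set W) = Suc k \<and> rchain adj W \<and> length W \<le> 2 * k + 1"
    by (rule Suc.IH)
  then obtain W where W: "W \<noteq> []" "hd W = r" "set W \<subseteq> S" "card (set W) = Suc k" "rchain adj W" "length W \<le> 2 * k + 1"
    by blast
  have "set W \<noteq> S" using W(4) Suc.prems by auto
  then have ne2: "S - set W \<noteq> {}" using W(3) by blast
  have ne1: "set W \<noteq> {}" using W(1) by simp
  have "set W \<union> (S - set W) = S \<and> set W \<inter> (S - set W) = {} \<and> set W \<noteq> {} \<and> S - set W \<noteq> {}"
    using W(3) ne1 ne2 by blast
  then have "\<exists>e1\<in>set W. \<exists>e2\<in>S - set W. e1 \<inter> e2 \<noteq> {}"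
    using mp[OF spec[OF spec[OF assms(1)[unfolded econn_def], of "set W"], of "S - set W"]] by blast
  then obtain e1 e2 where e: "e1 \<in> set W" "e2 \<in> S - set W" "e1 \<inter> e2 \<noteq> {}" by blast
  obtain A B where AB: "W = A @ e1 # B" using split_list[OF e(1)] by blast
  let ?W = "A @ e1 # e2 # e1 # B"
  have a12: "adj e1 e2" "adj e2 e1" using e(3) unfolding adj_def by auto
  have r0: "rchain adj (A @ e1 # B)" using W(5) AB by simp
  have r1: "rchain adj ?W" by (rule rchain_insert[OF r0 a12(1) a12(2)])
  have h1: "hd ?W = r" using W(2) AB by (cases A) simp_all
  have s1: "set ?W = insert e2 (set W)" using AB by auto
  have c1: "card (set ?W) = Suc (Suc k)" using s1 e(2) W(4) finite_subset[OF W(3) assms(2)] by simp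
  have "?W \<noteq> [] \<and> hd ?W = r \<and> set ?W \<subseteq> S \<and> card (set ?W) = Suc (Suc k) \<and> rchain adj ?W \<and> length ?W \<le> 2 * Suc k + 1"
    using r1 h1 s1 c1 W(3,6) e(2) AB by simp
  then show ?case by (rule exI)
qed

lemma econn_cover:
  assumes "econn S" "finite S" "r \<in> S"
  shows "\<exists>W. W \<noteq> [] \<and> hd W = r \<and> set W = S \<and> rchain adj W \<and> length W \<le> 2 * card S"
proof -
  have cpos: "card S > 0" using assms(2,3) by (auto simp: card_gt_0_iff)
  then have cS: "card S - 1 < card S" by simp
  have "\<exists>W. W \<noteq> [] \<and> hd W = r \<and> set W \<subseteq> S \<and> card (set W) = Suc (card S - 1) \<and> rchain adj W \<and> length W \<le> 2 * (card S - 1) + 1"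
    by (rule econn_cover_k[OF assms cS])
  then obtain W where W: "W \<noteq> []" "hd W = r" "set W \<subseteq> S" "card (set W) = Suc (card S - 1)" "rchain adj W" "length W \<le> 2 * (card S - 1) + 1"
    by blast
  have "card (set W) = card S" using W(4) cS by simp
  then have "set W = S" by (rule card_subset_eq[OF assms(2) W(3)])
  moreover have "length W \<le> 2 * card S" using W(6) cpos by simp
  ultimately have "W \<noteq> [] \<and> hd W = r \<and> set W = S \<and> rchain adj W \<and> length W \<le> 2 * card S" using W by simp
  then show ?thesis by (rule exI)
qed

lemma rchain_count:
  assumes X: "\<forall>x\<in>X. finite {y\<in>X. R x y} \<and> card {y\<in>X. R x y} \<le> D"
    and A: "finite A" "card A \<le> D"
  shows "finite {W. length W = Suc l \<and> hd W \<in> A \<and> set W \<subseteq> X \<and> rchain R W}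
       \<and> card {W. length W = Suc l \<and> hd W \<in> A \<and> set W \<subseteq> X \<and> rchain R W} \<le> D ^ Suc l"
proof (induction l)
  case 0
  have sub0: "{W. length W = Suc 0 \<and> hd W \<in> A \<and> set W \<subseteq> X \<and> rchain R W} \<subseteq> (\<lambda>a. [a]) ` A"
  proof
    fix W assume "W \<in> {W. length W = Suc 0 \<and> hd W \<in> A \<and> set W \<subseteq> X \<and> rchain R W}"
    then obtain a where "W = [a]" "a \<in> A" by (cases W) auto
    then show "W \<in> (\<lambda>a. [a]) ` A" by blast
  qed
  have f: "finite ((\<lambda>a. [a]) ` A)" using A by simp
  have "card ((\<lambda>a. [a]) ` A) \<le> D"
    using A card_image_le[OF A(1), of "\<lambda>a. [a]"] by simp
  moreover have "card {W. length W = Suc 0 \<and> hd W \<in> A \<and> set W \<subseteq> X \<and> rchain R W} \<le> card ((\<lambda>a. [a]) ` A)"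
    by (rule card_mono[OF f sub0])
  moreover have "finite {W. length W = Suc 0 \<and> hd W \<in> A \<and> set W \<subseteq> X \<and> rchain R W}"
    by (rule finite_subset[OF sub0 f])
  ultimately show ?case by simp
next
  case (Suc l)
  let ?T = "{W. length W = Suc l \<and> hd W \<in> A \<and> set W \<subseteq> X \<and> rchain R W}"
  let ?T' = "{W. length W = Suc (Suc l) \<and> hd W \<in> A \<and> set W \<subseteq> X \<and> rchain R W}"
  let ?S = "SIGMA W:?T. {y\<in>X. R (last W) y}"
  have sub: "?T' \<subseteq> (\<lambda>(W, y). W @ [y]) ` ?S"
  proof
    fix W assume W: "W \<in> ?T'"
    then have ne: "W \<noteq> []" by auto
    let ?W0 = "butlast W"
    have ne0: "?W0 \<noteq> []" using W by (cases W rule: rev_cases) auto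
    have Wd: "W = ?W0 @ [last W]" using ne by simp
    have rc: "rchain R ?W0 \<and> R (last ?W0) (last W)" using W rchain_snoc[OF ne0, of R "last W"] Wd by simp
    have "hd ?W0 = hd W" using ne0 Wd hd_append2[OF ne0, of "[last W]"] by simp
    moreover have "set ?W0 \<subseteq> set W" using in_set_butlastD by (rule subsetI)
    moreover have "last W \<in> set W" using ne by simp
    moreover have "set W \<subseteq> X" using W by simp
    ultimately have "hd ?W0 = hd W" "set ?W0 \<subseteq> X" "last W \<in> X" by blast+
    moreover have "length ?W0 = Suc l" using W by simp
    ultimately have "(?W0, last W) \<in> ?S" using W rc by simp
    then have "(\<lambda>(W, y). W @ [y]) (?W0, last W) \<in> (\<lambda>(W, y). W @ [y]) ` ?S" by (rule imageI)
    then show "W \<in> (\<lambda>(W, y). W @ [y]) ` ?S" using Wd by simp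
  qed
  have finT: "finite ?T" and cT: "card ?T \<le> D ^ Suc l" using Suc.IH by auto
  have fin2: "\<forall>W\<in>?T. finite {y\<in>X. R (last W) y} \<and> card {y\<in>X. R (last W) y} \<le> D"
  proof
    fix W assume "W \<in> ?T"
    then have "W \<noteq> []" "set W \<subseteq> X" by auto
    then have "last W \<in> X" using last_in_set by blast
    then show "finite {y\<in>X. R (last W) y} \<and> card {y\<in>X. R (last W) y} \<le> D" using X by blast
  qed
  have finS: "finite ?S" using finT fin2 by auto
  have "card ?T' \<le> card ((\<lambda>(W, y). W @ [y]) ` ?S)" using sub finS by (intro card_mono) auto
  also have "\<dots> \<le> card ?S" using finS by (rule card_image_le)
  also have "\<dots> = (\<Sum>W\<in>?T. card {y\<in>X. R (last W) y})" using finT fin2 by (intro card_SigmaI) auto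
  also have "\<dots> \<le> (\<Sum>W\<in>?T. D)" using fin2 by (intro sum_mono) blast
  also have "\<dots> = card ?T * D" by simp
  also have "\<dots> \<le> D ^ Suc l * D" using cT by (rule mult_le_mono1)
  finally have "card ?T' \<le> D ^ Suc (Suc l)" by (simp add: mult.commute)
  moreover have "finite ?T'" using sub finite_imageI[OF finS] by (rule finite_subset)
  ultimately show ?case by blast
qed


fun wedges :: "'v list \<Rightarrow> 'v set list" where
  "wedges (x # y # xs) = {x, y} # wedges (y # xs)"
| "wedges _ = []"

lemma wedges_set: "set (wedges xs) = walk_edges xs"
  by (induction xs rule: wedges.induct) auto

lemma wedges_length: "length (wedges xs) = length xs - 1"
  by (induction xs rule: wedges.induct) auto

lemma wedges_rchain: "rchain adj (wedges xs)"
proof (induction xs rule: wedges.induct)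
  case (1 x y xs)
  then show ?case by (cases xs) (auto simp: adj_def)
qed auto

lemma wedges_hd: "length xs \<ge> 2 \<Longrightarrow> hd xs \<in> hd (wedges xs)"
  by (cases xs rule: wedges.cases) auto

lemma wedges_last: "length xs \<ge> 2 \<Longrightarrow> last xs \<in> last (wedges xs)"
proof (induction xs rule: wedges.induct)
  case (1 x y xs)
  then show ?case by (cases xs) auto
qed auto

lemma interface_P_unique:
  assumes "interface V E Pc x0 P dP" "interface V E Pc x0 P' dP"
  shows "P = P'"
proof -
  obtain D where D: "D \<in> comps V (E - dP)" "finite D" "\<forall>e\<in>dP. e \<inter> D \<noteq> {}"
    "F_connected V E Pc dP (dirs dP D)"
    "P = {e \<in> E - dP. e \<subseteq> D \<and> connects_edge V E Pc dP e (dirs dP D)}"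
    "dP \<subseteq> E" "finite (comp V (E - dP) x0)"
    "\<forall>D'. D' \<in> comps V (E - dP) \<and> finite D' \<and> (\<forall>e\<in>dP. e \<inter> D' \<noteq> {}) \<longrightarrow> D' = D"
    by (rule interface_unfold[OF assms(1)])
  obtain D' where D': "D' \<in> comps V (E - dP)" "finite D'" "\<forall>e\<in>dP. e \<inter> D' \<noteq> {}"
    "F_connected V E Pc dP (dirs dP D')"
    "P' = {e \<in> E - dP. e \<subseteq> D' \<and> connects_edge V E Pc dP e (dirs dP D')}"
    "dP \<subseteq> E" "finite (comp V (E - dP) x0)"
    "\<forall>D''. D'' \<in> comps V (E - dP) \<and> finite D'' \<and> (\<forall>e\<in>dP. e \<inter> D'' \<noteq> {}) \<longrightarrow> D'' = D'"
    by (rule interface_unfold[OF assms(2)])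
  have "D' = D" using D(8) D'(1,2,3) by blast
  then show ?thesis using D(5) D'(5) by simp
qed

lemma adj_count:
  assumes G: "graph V E" and deg: "\<forall>v\<in>V. finite {e\<in>E. v \<in> e} \<and> card {e\<in>E. v \<in> e} \<le> \<Delta>"
    and e: "e \<in> E"
  shows "finite {f\<in>E. adj e f} \<and> card {f\<in>E. adj e f} \<le> 2 * \<Delta> + 1"
proof -
  have "\<exists>u w. u \<noteq> w \<and> u \<in> V \<and> w \<in> V \<and> e = {u, w}" using G e unfolding graph_def by (rule bspec)
  then obtain u w where uw: "u \<in> V" "w \<in> V" "e = {u, w}" by (elim exE conjE)
  have sub: "{f\<in>E. adj e f} \<subseteq> {f\<in>E. u \<in> f} \<union> {f\<in>E. w \<in> f}" unfolding adj_def uw(3) by blast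
  have f1: "finite {f\<in>E. u \<in> f}" "card {f\<in>E. u \<in> f} \<le> \<Delta>" using deg uw(1) by simp_all
  have f2: "finite {f\<in>E. w \<in> f}" "card {f\<in>E. w \<in> f} \<le> \<Delta>" using deg uw(2) by simp_all
  have fu: "finite ({f\<in>E. u \<in> f} \<union> {f\<in>E. w \<in> f})" using f1 f2 by simp
  have "card {f\<in>E. adj e f} \<le> card ({f\<in>E. u \<in> f} \<union> {f\<in>E. w \<in> f})" by (rule card_mono[OF fu sub])
  also have "\<dots> \<le> card {f\<in>E. u \<in> f} + card {f\<in>E. w \<in> f}" by (rule card_Un_le)
  finally have "card {f\<in>E. adj e f} \<le> 2 * \<Delta> + 1" using f1 f2 by simp
  moreover have "finite {f\<in>E. adj e f}" by (rule finite_subset[OF sub fu])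
  ultimately show ?thesis by simp
qed


lemma count_L:
  assumes G: "graph V E" and deg: "\<forall>v\<in>V. finite {e\<in>E. v \<in> e} \<and> card {e\<in>E. v \<in> e} \<le> \<Delta>"
    and x0: "x0 \<in> V"
  shows "finite {W. W \<noteq> [] \<and> length W \<le> k \<and> hd W \<in> {e\<in>E. x0 \<in> e} \<and> set W \<subseteq> E \<and> rchain adj W}
    \<and> card {W. W \<noteq> [] \<and> length W \<le> k \<and> hd W \<in> {e\<in>E. x0 \<in> e} \<and> set W \<subseteq> E \<and> rchain adj W} \<le> k * (2 * \<Delta> + 1) ^ k"
proof -
  let ?D = "2 * \<Delta> + 1"
  let ?A = "{e\<in>E. x0 \<in> e}"
  let ?T = "\<lambda>l. {W. length W = Suc l \<and> hd W \<in> ?A \<and> set W \<subseteq> E \<and> rchain adj W}"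
  have X: "\<forall>x\<in>E. finite {y\<in>E. adj x y} \<and> card {y\<in>E. adj x y} \<le> ?D"
    using adj_count[OF G deg] by blast
  have A: "finite ?A" "card ?A \<le> ?D" using deg x0 by auto
  have T: "finite (?T l) \<and> card (?T l) \<le> ?D ^ Suc l" for l
    by (rule rchain_count[OF X A])
  have sub: "{W. W \<noteq> [] \<and> length W \<le> k \<and> hd W \<in> ?A \<and> set W \<subseteq> E \<and> rchain adj W} \<subseteq> (\<Union>l<k. ?T l)"
  proof
    fix W assume W: "W \<in> {W. W \<noteq> [] \<and> length W \<le> k \<and> hd W \<in> ?A \<and> set W \<subseteq> E \<and> rchain adj W}"
    then have ne: "W \<noteq> []" and lk: "length W \<le> k" by auto
    then have "length W = Suc (length W - 1)" "length W - 1 < k" by (cases W; simp)+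
    then show "W \<in> (\<Union>l<k. ?T l)" using W by blast
  qed
  have finU: "finite (\<Union>l<k. ?T l)" using T by simp
  have "card (\<Union>l<k. ?T l) \<le> (\<Sum>l<k. card (?T l))" by (rule card_UN_le) simp
  also have "\<dots> \<le> (\<Sum>l<k. ?D ^ k)"
  proof (rule sum_mono)
    fix l assume "l \<in> {..<k}"
    then have "Suc l \<le> k" by simp
    then have "?D ^ Suc l \<le> ?D ^ k" by (rule power_increasing) simp
    then show "card (?T l) \<le> ?D ^ k" using T[of l] by simp
  qed
  also have "\<dots> = k * ?D ^ k" by simp
  finally have "card (\<Union>l<k. ?T l) \<le> k * ?D ^ k" .
  then show ?thesis using card_mono[OF finU sub] finite_subset[OF sub finU] by simp
qed

lemma count_interfaces:
  assumes G: "graph V E" and deg: "\<forall>v\<in>V. finite {e\<in>E. v \<in> e} \<and> card {e\<in>E. v \<in> e} \<le> \<Delta>"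
    and x0: "x0 \<in> V"
    and anchor: "\<forall>P dP. interface V E Pc x0 P dP \<longrightarrow>
        (\<exists>y\<in>\<Union>dP. \<exists>w. walk V E w \<and> hd w = x0 \<and> last w = y \<and> length w \<le> K * card dP + 1)"
  shows "finite {(P, dP). interface V E Pc x0 P dP \<and> card P \<le> m}
    \<and> card {(P, dP). interface V E Pc x0 P dP \<and> card P \<le> m} \<le> (4 * (2 * \<Delta> + 1)) ^ (K * (\<Delta> * (2 * m + 1)) + 2 * (m + \<Delta> * (2 * m + 1)))"
proof -
  let ?D = "2 * \<Delta> + 1"
  let ?b = "\<Delta> * (2 * m + 1)"
  define k where "k = K * ?b + 2 * (m + ?b)"
  let ?A = "{e\<in>E. x0 \<in> e}"
  define L where "L = {W. W \<noteq> [] \<and> length W \<le> k \<and> hd W \<in> ?A \<and> set W \<subseteq> E \<and> rchain adj W}"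
  define Ints where "Ints = {(P, dP). interface V E Pc x0 P dP \<and> card P \<le> m}"
  have L: "finite L" "card L \<le> k * ?D ^ k" using count_L[OF G deg x0, of k] unfolding L_def by auto
  have inj: "inj_on snd Ints"
  proof (rule inj_onI)
    fix a b assume ab: "a \<in> Ints" "b \<in> Ints" "snd a = snd b"
    have ia: "interface V E Pc x0 (fst a) (snd a)" using ab(1) unfolding Ints_def by (cases a) simp
    have ib: "interface V E Pc x0 (fst b) (snd a)" using ab(2,3) unfolding Ints_def by (cases b) simp
    have "fst a = fst b" by (rule interface_P_unique[OF ia ib])
    then show "a = b" using ab(3) by (rule prod_eqI)
  qed
  have img: "snd ` Ints \<subseteq> (\<Union>W\<in>L. Pow (set W))"
  proof
    fix dP assume "dP \<in> snd ` Ints"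
    then obtain P where I: "interface V E Pc x0 P dP" and cP: "card P \<le> m" unfolding Ints_def by auto
    obtain D where D: "D \<in> comps V (E - dP)" "finite D" "\<forall>e\<in>dP. e \<inter> D \<noteq> {}"
      "F_connected V E Pc dP (dirs dP D)"
      "P = {e \<in> E - dP. e \<subseteq> D \<and> connects_edge V E Pc dP e (dirs dP D)}"
      "dP \<subseteq> E" "finite (comp V (E - dP) x0)"
      "\<forall>D'. D' \<in> comps V (E - dP) \<and> finite D' \<and> (\<forall>e\<in>dP. e \<inter> D' \<noteq> {}) \<longrightarrow> D' = D"
      by (rule interface_unfold[OF I])
    have bnd: "finite P \<and> finite dP \<and> card dP \<le> \<Delta> * (2 * card P + 1)" by (rule interface_bound[OF G deg I])
    have "2 * card P + 1 \<le> 2 * m + 1" using cP by simp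
    then have h: "\<Delta> * (2 * card P + 1) \<le> ?b" by (rule mult_le_mono2)
    have "card dP \<le> \<Delta> * (2 * card P + 1)" using bnd by (elim conjE)
    then have cdP: "card dP \<le> ?b" using h by (rule le_trans)
    have "\<exists>y\<in>\<Union>dP. \<exists>w. walk V E w \<and> hd w = x0 \<and> last w = y \<and> length w \<le> K * card dP + 1"
      using anchor I by blast
    then obtain y w where y: "y \<in> \<Union>dP" and w: "walk V E w" "hd w = x0" "last w = y" "length w \<le> K * card dP + 1"
      by blast
    obtain r where r: "r \<in> dP" "y \<in> r" using y by blast
    let ?S = "P \<union> dP"
    have finS: "finite ?S" using bnd by simp
    have ec: "econn ?S" by (rule interface_econn[OF G I])
    have rS: "r \<in> ?S" using r(1) by simp
    have "\<exists>W. W \<noteq> [] \<and> hd W = r \<and> set W = ?S \<and> rchain adj W \<and> length W \<le> 2 * card ?S"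
      by (rule econn_cover[OF ec finS rS])
    then obtain Wc where Wc: "Wc \<noteq> []" "hd Wc = r" "set Wc = ?S" "rchain adj Wc" "length Wc \<le> 2 * card ?S"
      by blast
    let ?W = "wedges w @ Wc"
    have cS: "card ?S \<le> m + ?b" using card_Un_le[of P dP] cP cdP by simp
    have hK: "K * card dP \<le> K * ?b" using cdP by (rule mult_le_mono2)
    have "length (wedges w) \<le> K * card dP" using w(4) unfolding wedges_length by arith
    then have lw: "length (wedges w) \<le> K * ?b" using hK by (rule le_trans)
    have len: "length ?W \<le> k" unfolding k_def using lw Wc(5) cS by simp
    have SE: "?S \<subseteq> E" using D(5,6) by blast
    have setW: "set ?W \<subseteq> E" using wedges_set[of w] w(1) SE Wc(3) unfolding walk_def by auto
    have hdrc: "hd ?W \<in> ?A \<and> rchain adj ?W"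
    proof (cases "length w \<ge> 2")
      case True
      have ne: "wedges w \<noteq> []" using True wedges_length[of w] by auto
      have "x0 \<in> hd (wedges w)" using wedges_hd[OF True] w(2) by simp
      moreover have "hd (wedges w) \<in> E"
      proof -
        have "hd (wedges w) \<in> set (wedges w)" using ne by simp
        then show ?thesis using wedges_set[of w] w(1) unfolding walk_def by blast
      qed
      moreover have "hd ?W = hd (wedges w)" using ne by simp
      moreover have "rchain adj ?W"
      proof -
        obtain W1 l where W1: "wedges w = W1 @ [l]" using ne by (cases "wedges w" rule: rev_cases) auto
        have ll: "l = last (wedges w)" using W1 by simp
        obtain Wc' where Wc': "Wc = r # Wc'" using Wc(1,2) by (cases Wc) auto
        have "y \<in> l" using wedges_last[OF True] w(3) ll by simp
        then have a: "adj l r" using r(2) unfolding adj_def by blast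
        have "rchain adj (wedges w)" by (rule wedges_rchain)
        then have "rchain adj (W1 @ [l])" using W1 by simp
        moreover have "rchain adj (l # r # Wc')" using a Wc(4) Wc' by simp
        ultimately have "rchain adj (W1 @ l # r # Wc')" using rchain_append[of adj W1 l "r # Wc'"] by simp
        moreover have "?W = W1 @ l # r # Wc'" using W1 Wc' by simp
        ultimately show ?thesis by simp
      qed
      ultimately show ?thesis by simp
    next
      case False
      then have "length (wedges w) = 0" using wedges_length[of w] by simp
      then have e: "wedges w = []" by simp
      have "w \<noteq> []" using w(1) unfolding walk_def by simp
      then have "length w \<noteq> 0" by simp
      then have "length w = 1" using False by linarith
      then have "w = [hd w]" by (cases w) simp_all
      then have "y = x0" using w(2,3) by (metis last.simps)
      then have "x0 \<in> r" using r by simp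
      moreover have "r \<in> E" using r(1) D(6) by (rule subsetD[rotated])
      ultimately show ?thesis using e Wc(2,4) by simp
    qed
    have neW: "?W \<noteq> []" using Wc(1) by simp
    have "?W \<in> L" unfolding L_def using neW len hdrc setW by simp
    moreover have "dP \<subseteq> set ?W" using Wc(3) by auto
    ultimately show "dP \<in> (\<Union>W\<in>L. Pow (set W))" by blast
  qed
  have finP: "\<forall>W\<in>L. finite (Pow (set W))" by simp
  have finU: "finite (\<Union>W\<in>L. Pow (set W))" using L(1) finP by simp
  have "card (snd ` Ints) \<le> card (\<Union>W\<in>L. Pow (set W))" by (rule card_mono[OF finU img])
  also have "\<dots> \<le> (\<Sum>W\<in>L. card (Pow (set W)))" by (rule card_UN_le[OF L(1)])
  also have "\<dots> \<le> (\<Sum>W\<in>L. 2 ^ k)"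
  proof (rule sum_mono)
    fix W assume "W \<in> L"
    then have "card (set W) \<le> k" unfolding L_def using card_length[of W] by auto
    then have "(2::nat) ^ card (set W) \<le> 2 ^ k" by (rule power_increasing) simp
    then show "card (Pow (set W)) \<le> 2 ^ k" by (simp add: card_Pow)
  qed
  also have "\<dots> = card L * 2 ^ k" by simp
  also have "\<dots> \<le> k * ?D ^ k * 2 ^ k" using L(2) by simp
  also have "\<dots> \<le> 2 ^ k * ?D ^ k * 2 ^ k" using less_exp[of k] by simp
  also have "\<dots> = (4 * ?D) ^ k"
  proof -
    have "(4 * ?D) ^ k = (2 * 2 * ?D) ^ k" by simp
    also have "\<dots> = 2 ^ k * 2 ^ k * ?D ^ k" by (simp only: power_mult_distrib)
    finally show ?thesis by (simp add: mult_ac)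
  qed
  finally have c: "card (snd ` Ints) \<le> (4 * ?D) ^ k" .
  have "card Ints = card (snd ` Ints)" using card_image[OF inj] by simp
  moreover have "finite Ints" using finite_imageD[OF finite_subset[OF img finU] inj] .
  ultimately show ?thesis using c unfolding Ints_def k_def by simp
qed


lemma term_compare:
  fixes p q :: real and n m C :: nat
  assumes p: "0 < p" "p < 1" and q: "0 < q" "q < 1" and mb: "m \<le> C * n"
  shows "q ^ n * (1 - q) ^ m \<le> ((q / p) * (max 1 ((1 - q) / (1 - p))) ^ C) ^ n * (p ^ n * (1 - p) ^ m)"
proof -
  define \<rho> where "\<rho> = (1 - q) / (1 - p)"
  define \<rho>' where "\<rho>' = max 1 \<rho>"
  have r0: "0 \<le> \<rho>" unfolding \<rho>_def using p q by simp
  have r1: "1 \<le> \<rho>'" unfolding \<rho>'_def by simp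
  have rr: "\<rho> \<le> \<rho>'" unfolding \<rho>'_def by simp
  have eq1: "q ^ n = (q / p) ^ n * p ^ n" using p by (simp add: power_divide)
  have eq2: "(1 - q) ^ m = \<rho> ^ m * (1 - p) ^ m" unfolding \<rho>_def using p by (simp add: power_divide)
  have "\<rho> ^ m \<le> \<rho>' ^ m" using rr r0 by (rule power_mono)
  also have "\<dots> \<le> \<rho>' ^ (C * n)" using r1 mb by (rule power_increasing[rotated])
  finally have le: "\<rho> ^ m \<le> \<rho>' ^ (C * n)" .
  have nn: "0 \<le> (q / p) ^ n * p ^ n" "0 \<le> (1 - p) ^ m" using p q by simp_all
  have "q ^ n * (1 - q) ^ m = ((q / p) ^ n * p ^ n) * (\<rho> ^ m * (1 - p) ^ m)" using eq1 eq2 by simp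
  also have "\<dots> \<le> ((q / p) ^ n * p ^ n) * (\<rho>' ^ (C * n) * (1 - p) ^ m)"
    using le nn by (intro mult_left_mono mult_right_mono) simp_all
  also have "\<dots> = ((q / p) ^ n * \<rho>' ^ (C * n)) * (p ^ n * (1 - p) ^ m)"
    by (simp only: mult_ac)
  also have "\<dots> = ((q / p) * \<rho>' ^ C) ^ n * (p ^ n * (1 - p) ^ m)"
    by (simp only: power_mult_distrib power_mult)
  finally show ?thesis unfolding \<rho>'_def \<rho>_def .
qed


lemma sum_compare:
  fixes p q :: real and C :: nat
  assumes p: "0 < p" "p < 1" and q: "0 < q" "q < 1" and mb: "\<forall>x\<in>F. m x \<le> C * n"
  shows "(\<Sum>x\<in>F. q ^ n * (1 - q) ^ m x) \<le> ((q / p) * (max 1 ((1 - q) / (1 - p))) ^ C) ^ n * (\<Sum>x\<in>F. p ^ n * (1 - p) ^ m x)"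
proof -
  have "(\<Sum>x\<in>F. q ^ n * (1 - q) ^ m x) \<le> (\<Sum>x\<in>F. ((q / p) * (max 1 ((1 - q) / (1 - p))) ^ C) ^ n * (p ^ n * (1 - p) ^ m x))"
    using term_compare[OF p q] mb by (intro sum_mono) blast
  also have "\<dots> = ((q / p) * (max 1 ((1 - q) / (1 - p))) ^ C) ^ n * (\<Sum>x\<in>F. p ^ n * (1 - p) ^ m x)"
    by (rule sum_distrib_left[symmetric])
  finally show ?thesis .
qed

lemma generic_cont:
  fixes F :: "nat \<Rightarrow> 'x set" and m :: "'x \<Rightarrow> nat" and U :: real and C :: nat
  assumes fin: "\<forall>n. finite (F n)" and U: "0 \<le> U"
    and cnt: "\<forall>n\<ge>1. real (card (F n)) \<le> U ^ n"
    and mb: "\<forall>n\<ge>1. \<forall>x\<in>F n. m x \<le> C * n"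
  shows "continuous_on_01 (\<lambda>p. limsup (\<lambda>n. ereal (root n (\<Sum>x\<in>F n. p ^ n * (1 - p) ^ m x))))"
proof -
  define en where "en p n = (\<Sum>x\<in>F n. p ^ n * (1 - p) ^ m x)" for p :: real and n
  define Bf where "Bf p = limsup (\<lambda>n. ereal (root n (en p n)))" for p
  define L where "L p q = (q / p) * (max 1 ((1 - q) / (1 - p))) ^ C" for p q :: real
  have en0: "0 \<le> en p n" if "0 < p" "p < 1" for p n
    unfolding en_def using that by (intro sum_nonneg) simp
  have rt: "0 \<le> root n (en p n) \<and> root n (en p n) \<le> U" if p: "0 < p" "p < 1" for p n
  proof (cases "n = 0")
    case True then show ?thesis using U by simp
  next
    case False
    have "en p n \<le> (\<Sum>x\<in>F n. 1)" unfolding en_def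
      using p by (intro sum_mono mult_le_one power_le_one) simp_all
    also have "\<dots> = real (card (F n))" by simp
    also have "\<dots> \<le> U ^ n" using cnt False by simp
    finally have "root n (en p n) \<le> root n (U ^ n)" using False by simp
    also have "\<dots> = U" using False U by (simp add: real_root_power_cancel)
    finally show ?thesis using en0[OF p] real_root_ge_zero by blast
  qed
  have Bb: "0 \<le> Bf p \<and> Bf p \<le> ereal U" if p: "0 < p" "p < 1" for p
  proof
    show "Bf p \<le> ereal U" unfolding Bf_def
      by (rule Limsup_bounded) (use rt[OF p] in simp)
    show "0 \<le> Bf p" unfolding Bf_def
      by (rule le_Limsup) (use rt[OF p] in simp_all)
  qed
  define f where "f p = real_of_ereal (Bf p)" for p
  have Bf_eq: "Bf p = ereal (f p)" if p: "0 < p" "p < 1" for p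
    using Bb[OF p] unfolding f_def by (cases "Bf p") auto
  have fb: "0 \<le> f p \<and> f p \<le> U" if p: "0 < p" "p < 1" for p
    using Bb[OF p] Bf_eq[OF p] by simp
  have Lpos: "0 \<le> L p q" if "0 < p" "p < 1" "0 < q" "q < 1" for p q
    unfolding L_def using that by simp
  have cmp: "f q \<le> L p q * f p" if p: "0 < p" "p < 1" and q: "0 < q" "q < 1" for p q
  proof -
    have r: "root n (en q n) \<le> L p q * root n (en p n)" for n
    proof (cases "n = 0")
      case True then show ?thesis by simp
    next
      case False
      have "\<forall>x\<in>F n. m x \<le> C * n" using mb False by simp
      then have "en q n \<le> L p q ^ n * en p n" unfolding en_def L_def
        by (rule sum_compare[OF p q])
      then have "root n (en q n) \<le> root n (L p q ^ n * en p n)" using False by simp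
      also have "\<dots> = L p q * root n (en p n)"
        using False Lpos[OF p q] by (simp add: real_root_mult real_root_power_cancel)
      finally show ?thesis .
    qed
    have "Bf q \<le> limsup (\<lambda>n. ereal (L p q) * ereal (root n (en p n)))" unfolding Bf_def
      by (rule Limsup_mono) (use r in simp)
    also have "\<dots> = ereal (L p q) * Bf p" unfolding Bf_def
      by (rule limsup_ereal_mult_left) (rule Lpos[OF p q])
    finally have "ereal (f q) \<le> ereal (L p q) * ereal (f p)" using Bf_eq[OF p] Bf_eq[OF q] by simp
    then show ?thesis by simp
  qed
  have cont: "isCont f p0" if p0: "0 < p0" "p0 < 1" for p0
  proof -
    define g where "g q = U * (\<bar>L p0 q - 1\<bar> + \<bar>L q p0 - 1\<bar>)" for q
    have ev: "eventually (\<lambda>q. q \<in> {0<..<1}) (at p0)"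
      by (rule eventually_at_in_open') (use p0 in simp_all)
    have "eventually (\<lambda>q. norm (f q - f p0) \<le> g q) (at p0)"
      using ev
    proof eventually_elim
      case (elim q)
      then have q: "0 < q" "q < 1" by simp_all
      have a: "f q \<le> L p0 q * f p0" by (rule cmp[OF p0 q])
      have b: "f p0 \<le> L q p0 * f q" by (rule cmp[OF q p0])
      have fq: "0 \<le> f q" "f q \<le> U" using fb[OF q] by simp_all
      have fp: "0 \<le> f p0" "f p0 \<le> U" using fb[OF p0] by simp_all
      have "f q - f p0 \<le> (L p0 q - 1) * f p0" using a by (simp add: algebra_simps)
      also have "\<dots> \<le> \<bar>L p0 q - 1\<bar> * U" using fp
        by (metis abs_ge_self abs_ge_zero mult_mono order.trans order_refl)
      finally have 1: "f q - f p0 \<le> \<bar>L p0 q - 1\<bar> * U" .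
      have "f p0 - f q \<le> (L q p0 - 1) * f q" using b by (simp add: algebra_simps)
      also have "\<dots> \<le> \<bar>L q p0 - 1\<bar> * U" using fq
        by (metis abs_ge_self abs_ge_zero mult_mono order.trans order_refl)
      finally have 2: "f p0 - f q \<le> \<bar>L q p0 - 1\<bar> * U" .
      have "\<bar>L p0 q - 1\<bar> * U \<ge> 0" "\<bar>L q p0 - 1\<bar> * U \<ge> 0" using U by simp_all
      then show ?case unfolding g_def using 1 2 by (simp add: abs_le_iff algebra_simps)
    qed
    moreover have "(g \<longlongrightarrow> 0) (at p0)"
    proof -
      have "isCont g p0" unfolding g_def L_def using p0
        by (intro continuous_intros) auto
      moreover have "g p0 = 0" unfolding g_def L_def using p0 by simp
      ultimately show ?thesis unfolding isCont_def by simp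
    qed
    ultimately have "((\<lambda>q. f q - f p0) \<longlongrightarrow> 0) (at p0)" by (rule Lim_null_comparison)
    then show ?thesis unfolding isCont_def by (rule LIM_zero_cancel)
  qed
  have "continuous_on {0<..<1} f"
    using cont by (subst continuous_on_eq_continuous_at) auto
  moreover have "\<forall>p\<in>{0<..<1}. Bf p = ereal (f p)" using Bf_eq by simp
  ultimately show ?thesis unfolding continuous_on_01_def Bf_def en_def by blast
qed


lemma bern_event_set:
  fixes I :: "'i set" and A B :: "'i set"
  assumes "finite A" "finite B" "A \<subseteq> I" "B \<subseteq> I" "A \<inter> B = {}"
  shows "{\<omega> \<in> space (PiM I (\<lambda>_. measure_pmf (bernoulli_pmf p))). (\<forall>e\<in>A. \<omega> e) \<and> (\<forall>e\<in>B. \<not> \<omega> e)}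
     = prod_emb I (\<lambda>_. measure_pmf (bernoulli_pmf p)) (A \<union> B) (PiE (A \<union> B) (\<lambda>e. if e \<in> A then {True} else {False}))"
  using assms(5) by (auto simp: prod_emb_def space_PiM restrict_PiE_iff Pi_iff split: if_splits; blast)

lemma bern_event:
  fixes I :: "'i set" and A B :: "'i set"
  assumes "finite A" "finite B" "A \<subseteq> I" "B \<subseteq> I" "A \<inter> B = {}" "0 \<le> p" "p \<le> 1"
  shows "emeasure (PiM I (\<lambda>_. measure_pmf (bernoulli_pmf p)))
           {\<omega> \<in> space (PiM I (\<lambda>_. measure_pmf (bernoulli_pmf p))). (\<forall>e\<in>A. \<omega> e) \<and> (\<forall>e\<in>B. \<not> \<omega> e)}
         = ennreal (p ^ card A * (1 - p) ^ card B)"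
    and "{\<omega> \<in> space (PiM I (\<lambda>_. measure_pmf (bernoulli_pmf p))). (\<forall>e\<in>A. \<omega> e) \<and> (\<forall>e\<in>B. \<not> \<omega> e)}
          \<in> sets (PiM I (\<lambda>_. measure_pmf (bernoulli_pmf p)))"
proof -
  let ?M = "\<lambda>_::'i. measure_pmf (bernoulli_pmf p)"
  let ?X = "\<lambda>e. if e \<in> A then {True} else {False}"
  note eq = bern_event_set[OF assms(1-5), of p]
  show "{\<omega> \<in> space (PiM I ?M). (\<forall>e\<in>A. \<omega> e) \<and> (\<forall>e\<in>B. \<not> \<omega> e)} \<in> sets (PiM I ?M)"
    unfolding eq by (rule sets_PiM_I) (use assms in auto)
  have "emeasure (PiM I ?M) (prod_emb I ?M (A \<union> B) (PiE (A \<union> B) ?X)) = (\<Prod>e\<in>A \<union> B. emeasure (?M e) (?X e))"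
    by (rule emeasure_PiM_emb) (use assms in \<open>auto simp: prob_space_measure_pmf\<close>)
  also have "\<dots> = (\<Prod>e\<in>A. emeasure (?M e) (?X e)) * (\<Prod>e\<in>B. emeasure (?M e) (?X e))"
    by (rule prod.union_disjoint) (use assms in auto)
  also have "(\<Prod>e\<in>A. emeasure (?M e) (?X e)) = (\<Prod>e\<in>A. ennreal p)"
    using assms by (intro prod.cong) (auto simp: emeasure_pmf_single)
  also have "(\<Prod>e\<in>B. emeasure (?M e) (?X e)) = (\<Prod>e\<in>B. ennreal (1 - p))"
    using assms by (intro prod.cong) (auto simp: emeasure_pmf_single)
  finally show "emeasure (PiM I ?M) {\<omega> \<in> space (PiM I ?M). (\<forall>e\<in>A. \<omega> e) \<and> (\<forall>e\<in>B. \<not> \<omega> e)} = ennreal (p ^ card A * (1 - p) ^ card B)"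
    using eq assms by (simp add: prod_ennreal ennreal_mult' ennreal_power)
qed

lemma ecard_finite: "finite S \<Longrightarrow> ecard S = of_nat (card S)"
  unfolding ecard_def by simp

lemma EN_generic:
  fixes I :: "'i set" and F :: "('i set \<times> 'i set) set"
  assumes fin: "finite F" and FI: "\<forall>x\<in>F. finite (fst x) \<and> finite (snd x) \<and> fst x \<subseteq> I \<and> snd x \<subseteq> I \<and> fst x \<inter> snd x = {}"
    and p: "0 \<le> p" "p \<le> 1"
  shows "(\<integral>\<^sup>+\<omega>. ecard {x\<in>F. (\<forall>e\<in>fst x. \<omega> e) \<and> (\<forall>e\<in>snd x. \<not> \<omega> e)} \<partial>PiM I (\<lambda>_. measure_pmf (bernoulli_pmf p)))
     = ennreal (\<Sum>x\<in>F. p ^ card (fst x) * (1 - p) ^ card (snd x))"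
proof -
  let ?M = "PiM I (\<lambda>_. measure_pmf (bernoulli_pmf p))"
  define A where "A x = {\<omega> \<in> space ?M. (\<forall>e\<in>fst x. \<omega> e) \<and> (\<forall>e\<in>snd x. \<not> \<omega> e)}" for x
  have As: "A x \<in> sets ?M" and Am: "emeasure ?M (A x) = ennreal (p ^ card (fst x) * (1 - p) ^ card (snd x))"
    if "x \<in> F" for x
    using bern_event[of "fst x" "snd x" I p] FI that p unfolding A_def by auto
  have "(\<integral>\<^sup>+\<omega>. ecard {x\<in>F. (\<forall>e\<in>fst x. \<omega> e) \<and> (\<forall>e\<in>snd x. \<not> \<omega> e)} \<partial>?M)
      = (\<integral>\<^sup>+\<omega>. (\<Sum>x\<in>F. indicator (A x) \<omega>) \<partial>?M)"
  proof (rule nn_integral_cong)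
    fix \<omega> assume \<omega>: "\<omega> \<in> space ?M"
    have f: "finite {x\<in>F. (\<forall>e\<in>fst x. \<omega> e) \<and> (\<forall>e\<in>snd x. \<not> \<omega> e)}" using fin by simp
    have "ecard {x\<in>F. (\<forall>e\<in>fst x. \<omega> e) \<and> (\<forall>e\<in>snd x. \<not> \<omega> e)} = of_nat (card {x\<in>F. (\<forall>e\<in>fst x. \<omega> e) \<and> (\<forall>e\<in>snd x. \<not> \<omega> e)})"
      using f by (rule ecard_finite)
    also have "\<dots> = (\<Sum>x\<in>F. indicator (A x) \<omega>)"
      unfolding A_def using \<omega> fin
      by (simp add: indicator_def sum.If_cases of_nat_sum[symmetric] Int_def)
    finally show "ecard {x\<in>F. (\<forall>e\<in>fst x. \<omega> e) \<and> (\<forall>e\<in>snd x. \<not> \<omega> e)} = (\<Sum>x\<in>F. indicator (A x) \<omega>)" .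
  qed
  also have "\<dots> = (\<Sum>x\<in>F. \<integral>\<^sup>+\<omega>. indicator (A x) \<omega> \<partial>?M)"
    by (rule nn_integral_sum) (use As in simp)
  also have "\<dots> = (\<Sum>x\<in>F. ennreal (p ^ card (fst x) * (1 - p) ^ card (snd x)))"
    using As Am by (intro sum.cong) simp_all
  also have "\<dots> = ennreal (\<Sum>x\<in>F. p ^ card (fst x) * (1 - p) ^ card (snd x))"
    using p by (intro sum_ennreal) simp
  finally show ?thesis .
qed


lemma cont01_transfer:
  assumes "continuous_on_01 B'" "\<forall>p\<in>{0<..<1}. B p = B' p"
  shows "continuous_on_01 B"
  using assms unfolding continuous_on_01_def by metis

lemma eroot_ennreal: "0 \<le> r \<Longrightarrow> eroot n (ennreal r) = ereal (root n r)"
  unfolding eroot_def by simp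

lemma k_bound: "(K::nat) * (\<Delta> * (2 * m + 1)) + 2 * (m + \<Delta> * (2 * m + 1)) \<le> (2 * K * \<Delta> + 2 + 4 * \<Delta>) * (m + 1)"
  by (simp add: algebra_simps)

lemma cardP_le:
  assumes G: "graph V E" and deg: "\<forall>v\<in>V. finite {e\<in>E. v \<in> e} \<and> card {e\<in>E. v \<in> e} \<le> \<Delta>"
    and I: "interface V E Pc x0 P dP"
  shows "card P \<le> \<Delta> * card (\<Union>P) \<and> finite (\<Union>P) \<and> \<Union>P \<subseteq> V"
proof -
  obtain D where D: "D \<in> comps V (E - dP)" "finite D" "\<forall>e\<in>dP. e \<inter> D \<noteq> {}"
    "F_connected V E Pc dP (dirs dP D)"
    "P = {e \<in> E - dP. e \<subseteq> D \<and> connects_edge V E Pc dP e (dirs dP D)}"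
    "dP \<subseteq> E" "finite (comp V (E - dP) x0)"
    "\<forall>D'. D' \<in> comps V (E - dP) \<and> finite D' \<and> (\<forall>e\<in>dP. e \<inter> D' \<noteq> {}) \<longrightarrow> D' = D"
    by (rule interface_unfold[OF I])
  have DV: "D \<subseteq> V" by (rule comps_sub[OF D(1)])
  have UD: "\<Union>P \<subseteq> D" unfolding D(5) by blast
  have UV: "\<Union>P \<subseteq> V" using UD DV by (rule subset_trans)
  have finU: "finite (\<Union>P)" using UD D(2) by (rule finite_subset)
  have sub: "P \<subseteq> (\<Union>v\<in>\<Union>P. {e\<in>E. v \<in> e})"
  proof
    fix e assume e: "e \<in> P"
    then have "e \<in> E" unfolding D(5) by simp
    then have "card e = 2" using edge_card[OF G] by simp
    then have "e \<noteq> {}" by auto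
    then obtain v where "v \<in> e" by blast
    then show "e \<in> (\<Union>v\<in>\<Union>P. {e\<in>E. v \<in> e})" using e \<open>e \<in> E\<close> by blast
  qed
  have fin1: "\<forall>v\<in>\<Union>P. finite {e\<in>E. v \<in> e}"
  proof
    fix v assume "v \<in> \<Union>P" then have "v \<in> V" using UV by (rule subsetD[rotated])
    then show "finite {e\<in>E. v \<in> e}" using deg by simp
  qed
  have finUU: "finite (\<Union>v\<in>\<Union>P. {e\<in>E. v \<in> e})"
    by (rule finite_UN_I[OF finU]) (use fin1 in blast)
  have "card P \<le> card (\<Union>v\<in>\<Union>P. {e\<in>E. v \<in> e})" by (rule card_mono[OF finUU sub])
  also have "\<dots> \<le> (\<Sum>v\<in>\<Union>P. card {e\<in>E. v \<in> e})" by (rule card_UN_le[OF finU])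
  also have "\<dots> \<le> (\<Sum>v\<in>\<Union>P. \<Delta>)"
  proof (rule sum_mono)
    fix v assume "v \<in> \<Union>P" then have "v \<in> V" using UV by (rule subsetD[rotated])
    then show "card {e\<in>E. v \<in> e} \<le> \<Delta>" using deg by simp
  qed
  also have "\<dots> = \<Delta> * card (\<Union>P)" by simp
  finally show ?thesis using finU UV by simp
qed


lemma interface_sets:
  assumes I: "interface V E Pc x0 P dP"
  shows "P \<subseteq> E \<and> dP \<subseteq> E \<and> P \<inter> dP = {}"
proof -
  obtain D where D: "D \<in> comps V (E - dP)" "finite D" "\<forall>e\<in>dP. e \<inter> D \<noteq> {}"
    "F_connected V E Pc dP (dirs dP D)"
    "P = {e \<in> E - dP. e \<subseteq> D \<and> connects_edge V E Pc dP e (dirs dP D)}"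
    "dP \<subseteq> E" "finite (comp V (E - dP) x0)"
    "\<forall>D'. D' \<in> comps V (E - dP) \<and> finite D' \<and> (\<forall>e\<in>dP. e \<inter> D' \<noteq> {}) \<longrightarrow> D' = D"
    by (rule interface_unfold[OF I])
  show ?thesis using D(5,6) by blast
qed

lemma bond_part:
  assumes G: "graph V E" and deg: "\<forall>v\<in>V. finite {e\<in>E. v \<in> e} \<and> card {e\<in>E. v \<in> e} \<le> \<Delta>"
    and x0: "x0 \<in> V"
    and anchor: "\<forall>P dP. interface V E Pc x0 P dP \<longrightarrow>
        (\<exists>y\<in>\<Union>dP. \<exists>w. walk V E w \<and> hd w = x0 \<and> last w = y \<and> length w \<le> K * card dP + 1)"
  shows "continuous_on_01 (B_bond V E Pc x0)"
proof -
  define Fb where "Fb n = {(P, dP). interface V E Pc x0 P dP \<and> card P = n}" for n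
  define Ints where "Ints m = {(P, dP). interface V E Pc x0 P dP \<and> card P \<le> m}" for m
  define W :: nat where "W = 4 * (2 * \<Delta> + 1)"
  define c :: nat where "c = 2 * K * \<Delta> + 2 + 4 * \<Delta>"
  have CI: "finite (Ints m) \<and> card (Ints m) \<le> W ^ (K * (\<Delta> * (2 * m + 1)) + 2 * (m + \<Delta> * (2 * m + 1)))" for m
    unfolding Ints_def W_def by (rule count_interfaces[OF G deg x0 anchor])
  have FI: "Fb n \<subseteq> Ints n" for n unfolding Fb_def Ints_def by auto
  have finF: "\<forall>n. finite (Fb n)" using CI FI finite_subset by metis
  have W1: "1 \<le> W" unfolding W_def by simp
  have cnt: "\<forall>n\<ge>1. real (card (Fb n)) \<le> real (W ^ (2 * c)) ^ n"
  proof (intro allI impI)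
    fix n :: nat assume n: "1 \<le> n"
    have "card (Fb n) \<le> card (Ints n)" using CI FI by (intro card_mono) auto
    also have "\<dots> \<le> W ^ (K * (\<Delta> * (2 * n + 1)) + 2 * (n + \<Delta> * (2 * n + 1)))" using CI by blast
    also have "\<dots> \<le> W ^ (c * (n + 1))" unfolding c_def by (rule power_increasing[OF k_bound W1])
    also have "\<dots> \<le> W ^ (2 * c * n)"
    proof (rule power_increasing[OF _ W1])
      have "n + 1 \<le> 2 * n" using n by simp
      then show "c * (n + 1) \<le> 2 * c * n" using mult_le_mono2[of "n + 1" "2 * n" c] by (simp add: mult_ac)
    qed
    also have "\<dots> = (W ^ (2 * c)) ^ n" by (simp add: power_mult)
    finally have "card (Fb n) \<le> (W ^ (2 * c)) ^ n" .
    then have "real (card (Fb n)) \<le> real ((W ^ (2 * c)) ^ n)" by (rule of_nat_mono)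
    then show "real (card (Fb n)) \<le> real (W ^ (2 * c)) ^ n" by simp
  qed
  have mb: "\<forall>n\<ge>1. \<forall>x\<in>Fb n. (card \<circ> snd) x \<le> (3 * \<Delta>) * n"
  proof (intro allI impI ballI)
    fix n x assume n: "1 \<le> n" and x: "x \<in> Fb n"
    obtain P dP where x': "x = (P, dP)" "interface V E Pc x0 P dP" "card P = n" using x unfolding Fb_def by auto
    have "card dP \<le> \<Delta> * (2 * card P + 1)" using interface_bound[OF G deg x'(2)] by simp
    also have "\<dots> \<le> \<Delta> * (3 * n)" using n x'(3) by (intro mult_le_mono2) simp
    finally show "(card \<circ> snd) x \<le> (3 * \<Delta>) * n" using x'(1) by (simp add: mult_ac)
  qed
  have gc: "continuous_on_01 (\<lambda>p. limsup (\<lambda>n. ereal (root n (\<Sum>x\<in>Fb n. p ^ n * (1 - p) ^ (card \<circ> snd) x))))"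
    by (rule generic_cont[OF finF _ cnt mb]) simp
  show ?thesis
  proof (rule cont01_transfer[OF gc], intro ballI)
    fix p :: real assume "p \<in> {0<..<1}"
    then have p: "0 \<le> p" "p \<le> 1" by auto
    have EN: "EN_bond V E Pc x0 p n = ennreal (\<Sum>x\<in>Fb n. p ^ n * (1 - p) ^ (card \<circ> snd) x)" for n
    proof -
      have Nb: "N_bond V E Pc x0 n \<omega> = ecard {x\<in>Fb n. (\<forall>e\<in>fst x. \<omega> e) \<and> (\<forall>e\<in>snd x. \<not> \<omega> e)}" for \<omega>
        unfolding N_bond_def Fb_def by (rule arg_cong[where f=ecard]) auto
      have FIx: "\<forall>x\<in>Fb n. finite (fst x) \<and> finite (snd x) \<and> fst x \<subseteq> E \<and> snd x \<subseteq> E \<and> fst x \<inter> snd x = {}"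
      proof
        fix x assume "x \<in> Fb n"
        then obtain P dP where x': "x = (P, dP)" "interface V E Pc x0 P dP" unfolding Fb_def by auto
        show "finite (fst x) \<and> finite (snd x) \<and> fst x \<subseteq> E \<and> snd x \<subseteq> E \<and> fst x \<inter> snd x = {}"
          using interface_bound[OF G deg x'(2)] interface_sets[OF x'(2)] x'(1) by simp
      qed
      have "EN_bond V E Pc x0 p n = ennreal (\<Sum>x\<in>Fb n. p ^ card (fst x) * (1 - p) ^ card (snd x))"
        unfolding EN_bond_def bond_measure_def Nb using finF FIx p by (intro EN_generic) auto
      also have "(\<Sum>x\<in>Fb n. p ^ card (fst x) * (1 - p) ^ card (snd x)) = (\<Sum>x\<in>Fb n. p ^ n * (1 - p) ^ (card \<circ> snd) x)"
        by (intro sum.cong) (auto simp: Fb_def)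
      finally show ?thesis .
    qed
    have nn: "0 \<le> (\<Sum>x\<in>Fb n. p ^ n * (1 - p) ^ (card \<circ> snd) x)" for n using p by (intro sum_nonneg) simp
    show "B_bond V E Pc x0 p = limsup (\<lambda>n. ereal (root n (\<Sum>x\<in>Fb n. p ^ n * (1 - p) ^ (card \<circ> snd) x)))"
      unfolding B_bond_def EN eroot_ennreal[OF nn] ..
  qed
qed


lemma dP_vertices:
  assumes G: "graph V E" and deg: "\<forall>v\<in>V. finite {e\<in>E. v \<in> e} \<and> card {e\<in>E. v \<in> e} \<le> \<Delta>"
    and I: "interface V E Pc x0 P dP"
  shows "finite (\<Union>dP) \<and> \<Union>dP \<subseteq> V \<and> card (\<Union>dP) \<le> 2 * card dP"
proof -
  have dE: "dP \<subseteq> E" using interface_sets[OF I] by simp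
  have fdP: "finite dP" using interface_bound[OF G deg I] by simp
  have ef: "\<forall>e\<in>dP. finite e \<and> card e = 2" using edge_card[OF G] dE by blast
  have "\<Union>dP \<subseteq> V"
  proof
    fix v assume "v \<in> \<Union>dP"
    then obtain e where e: "e \<in> dP" "v \<in> e" by blast
    have "e \<in> E" using e(1) dE by (rule subsetD[rotated])
    then show "v \<in> V" using edge_other[OF G \<open>e \<in> E\<close> e(2)] by blast
  qed
  moreover have "finite (\<Union>dP)" using fdP ef by blast
  moreover have "card (\<Union>dP) \<le> (\<Sum>e\<in>dP. card e)" by (rule card_Union_le_sum_card)
  moreover have "(\<Sum>e\<in>dP. card e) = 2 * card dP" using ef by simp
  ultimately show ?thesis by simp
qed

lemma site_part:
  assumes G: "graph V E" and deg: "\<forall>v\<in>V. finite {e\<in>E. v \<in> e} \<and> card {e\<in>E. v \<in> e} \<le> \<Delta>"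
    and x0: "x0 \<in> V"
    and anchor: "\<forall>P dP. interface V E Pc x0 P dP \<longrightarrow>
        (\<exists>y\<in>\<Union>dP. \<exists>w. walk V E w \<and> hd w = x0 \<and> last w = y \<and> length w \<le> K * card dP + 1)"
  shows "continuous_on_01 (B_site V E Pc x0)"
proof -
  define Fs where "Fs n = {(\<Union>P, \<Union>dP - \<Union>P) | P dP. site_interface V E Pc x0 P dP \<and> card (\<Union>P) = n}" for n
  define Ints where "Ints m = {(P, dP). interface V E Pc x0 P dP \<and> card P \<le> m}" for m
  define W :: nat where "W = 4 * (2 * \<Delta> + 1)"
  define c :: nat where "c = 2 * K * \<Delta> + 2 + 4 * \<Delta>"
  let ?f = "\<lambda>(P::'a set set, dP::'a set set). (\<Union>P, \<Union>dP - \<Union>P)"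
  have CI: "finite (Ints m) \<and> card (Ints m) \<le> W ^ (K * (\<Delta> * (2 * m + 1)) + 2 * (m + \<Delta> * (2 * m + 1)))" for m
    unfolding Ints_def W_def by (rule count_interfaces[OF G deg x0 anchor])
  have FI: "Fs n \<subseteq> ?f ` Ints (\<Delta> * n)" for n
  proof
    fix x assume "x \<in> Fs n"
    then obtain P dP where x: "x = (\<Union>P, \<Union>dP - \<Union>P)" "site_interface V E Pc x0 P dP" "card (\<Union>P) = n"
      unfolding Fs_def by blast
    have I: "interface V E Pc x0 P dP" using x(2) unfolding site_interface_def by simp
    have "card P \<le> \<Delta> * n" using cardP_le[OF G deg I] x(3) by simp
    then have "(P, dP) \<in> Ints (\<Delta> * n)" unfolding Ints_def using I by simp
    then have "?f (P, dP) \<in> ?f ` Ints (\<Delta> * n)" by (rule imageI)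
    then show "x \<in> ?f ` Ints (\<Delta> * n)" using x(1) by simp
  qed
  have finF: "\<forall>n. finite (Fs n)"
  proof
    fix n
    have "finite (?f ` Ints (\<Delta> * n))" using CI by blast
    then show "finite (Fs n)" using FI by (rule finite_subset[rotated])
  qed
  have W1: "1 \<le> W" unfolding W_def by simp
  have cnt: "\<forall>n\<ge>1. real (card (Fs n)) \<le> real (W ^ (c * (\<Delta> + 1))) ^ n"
  proof (intro allI impI)
    fix n :: nat assume n: "1 \<le> n"
    have "card (Fs n) \<le> card (?f ` Ints (\<Delta> * n))" using CI FI by (intro card_mono) auto
    also have "\<dots> \<le> card (Ints (\<Delta> * n))" using CI by (intro card_image_le) blast
    also have "\<dots> \<le> W ^ (K * (\<Delta> * (2 * (\<Delta> * n) + 1)) + 2 * (\<Delta> * n + \<Delta> * (2 * (\<Delta> * n) + 1)))" using CI by blast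
    also have "\<dots> \<le> W ^ (c * (\<Delta> * n + 1))" unfolding c_def by (rule power_increasing[OF k_bound W1])
    also have "\<dots> \<le> W ^ (c * (\<Delta> + 1) * n)"
    proof (rule power_increasing[OF _ W1])
      have "\<Delta> * n + 1 \<le> (\<Delta> + 1) * n" using n by (simp add: algebra_simps)
      then have "c * (\<Delta> * n + 1) \<le> c * ((\<Delta> + 1) * n)" by (rule mult_le_mono2)
      then show "c * (\<Delta> * n + 1) \<le> c * (\<Delta> + 1) * n" by (simp only: mult.assoc)
    qed
    also have "\<dots> = (W ^ (c * (\<Delta> + 1))) ^ n" by (simp add: power_mult)
    finally have "card (Fs n) \<le> (W ^ (c * (\<Delta> + 1))) ^ n" .
    then have "real (card (Fs n)) \<le> real ((W ^ (c * (\<Delta> + 1))) ^ n)" by (rule of_nat_mono)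
    then show "real (card (Fs n)) \<le> real (W ^ (c * (\<Delta> + 1))) ^ n" by simp
  qed
  have mb: "\<forall>n\<ge>1. \<forall>x\<in>Fs n. (card \<circ> snd) x \<le> (4 * \<Delta> * \<Delta> + 2 * \<Delta>) * n"
  proof (intro allI impI ballI)
    fix n x assume n: "1 \<le> n" and x: "x \<in> Fs n"
    then obtain P dP where x': "x = (\<Union>P, \<Union>dP - \<Union>P)" "site_interface V E Pc x0 P dP" "card (\<Union>P) = n"
      unfolding Fs_def by blast
    have I: "interface V E Pc x0 P dP" using x'(2) unfolding site_interface_def by simp
    note dv = dP_vertices[OF G deg I]
    have "card (\<Union>dP - \<Union>P) \<le> card (\<Union>dP)" using dv by (intro card_mono) auto
    also have "\<dots> \<le> 2 * card dP" using dv by simp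
    also have "\<dots> \<le> 2 * (\<Delta> * (2 * card P + 1))" using interface_bound[OF G deg I] by simp
    also have "\<dots> \<le> 2 * (\<Delta> * (2 * (\<Delta> * n) + 1))"
      using cardP_le[OF G deg I] x'(3) by (intro mult_le_mono2 add_le_mono1) simp
    also have "\<dots> \<le> (4 * \<Delta> * \<Delta> + 2 * \<Delta>) * n" using n by (simp add: algebra_simps)
    finally show "(card \<circ> snd) x \<le> (4 * \<Delta> * \<Delta> + 2 * \<Delta>) * n" using x'(1) by simp
  qed
  have gc: "continuous_on_01 (\<lambda>p. limsup (\<lambda>n. ereal (root n (\<Sum>x\<in>Fs n. p ^ n * (1 - p) ^ (card \<circ> snd) x))))"
    by (rule generic_cont[OF finF _ cnt mb]) simp
  show ?thesis
  proof (rule cont01_transfer[OF gc], intro ballI)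
    fix p :: real assume "p \<in> {0<..<1}"
    then have p: "0 \<le> p" "p \<le> 1" by auto
    have EN: "EN_site V E Pc x0 p n = ennreal (\<Sum>x\<in>Fs n. p ^ n * (1 - p) ^ (card \<circ> snd) x)" for n
    proof -
      have Ns: "N_site V E Pc x0 n \<omega> = ecard {x\<in>Fs n. (\<forall>e\<in>fst x. \<omega> e) \<and> (\<forall>e\<in>snd x. \<not> \<omega> e)}" for \<omega>
        unfolding N_site_def
      proof (rule arg_cong[where f=ecard], rule set_eqI, rule iffI)
        fix x assume "x \<in> {(\<Union>P, \<Union>dP - \<Union>P) |P dP. site_interface V E Pc x0 P dP \<and> card (\<Union>P) = n \<and> (\<forall>v\<in>\<Union>P. \<omega> v) \<and> (\<forall>v\<in>\<Union>dP - \<Union>P. \<not> \<omega> v)}"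
        then obtain P dP where x: "x = (\<Union>P, \<Union>dP - \<Union>P)" "site_interface V E Pc x0 P dP" "card (\<Union>P) = n"
          "\<forall>v\<in>\<Union>P. \<omega> v" "\<forall>v\<in>\<Union>dP - \<Union>P. \<not> \<omega> v" by blast
        have "x \<in> Fs n" unfolding Fs_def using x(1-3) by blast
        then show "x \<in> {x\<in>Fs n. (\<forall>e\<in>fst x. \<omega> e) \<and> (\<forall>e\<in>snd x. \<not> \<omega> e)}" using x(1,4,5) by simp
      next
        fix x assume "x \<in> {x\<in>Fs n. (\<forall>e\<in>fst x. \<omega> e) \<and> (\<forall>e\<in>snd x. \<not> \<omega> e)}"
        then have xF: "x \<in> Fs n" and o: "\<forall>e\<in>fst x. \<omega> e" "\<forall>e\<in>snd x. \<not> \<omega> e" by simp_all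
        then obtain P dP where x: "x = (\<Union>P, \<Union>dP - \<Union>P)" "site_interface V E Pc x0 P dP" "card (\<Union>P) = n"
          unfolding Fs_def by blast
        have "\<forall>v\<in>\<Union>P. \<omega> v" "\<forall>v\<in>\<Union>dP - \<Union>P. \<not> \<omega> v" using o x(1) by simp_all
        then show "x \<in> {(\<Union>P, \<Union>dP - \<Union>P) |P dP. site_interface V E Pc x0 P dP \<and> card (\<Union>P) = n \<and> (\<forall>v\<in>\<Union>P. \<omega> v) \<and> (\<forall>v\<in>\<Union>dP - \<Union>P. \<not> \<omega> v)}"
          using x by blast
      qed
      have FIx: "\<forall>x\<in>Fs n. finite (fst x) \<and> finite (snd x) \<and> fst x \<subseteq> V \<and> snd x \<subseteq> V \<and> fst x \<inter> snd x = {}"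
      proof
        fix x assume "x \<in> Fs n"
        then obtain P dP where x': "x = (\<Union>P, \<Union>dP - \<Union>P)" "site_interface V E Pc x0 P dP"
          unfolding Fs_def by blast
        have I: "interface V E Pc x0 P dP" using x'(2) unfolding site_interface_def by simp
        show "finite (fst x) \<and> finite (snd x) \<and> fst x \<subseteq> V \<and> snd x \<subseteq> V \<and> fst x \<inter> snd x = {}"
          using cardP_le[OF G deg I] dP_vertices[OF G deg I] x'(1) by auto
      qed
      have "EN_site V E Pc x0 p n = ennreal (\<Sum>x\<in>Fs n. p ^ card (fst x) * (1 - p) ^ card (snd x))"
        unfolding EN_site_def site_measure_def Ns using finF FIx p by (intro EN_generic) auto
      also have "(\<Sum>x\<in>Fs n. p ^ card (fst x) * (1 - p) ^ card (snd x)) = (\<Sum>x\<in>Fs n. p ^ n * (1 - p) ^ (card \<circ> snd) x)"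
        by (intro sum.cong) (auto simp: Fs_def)
      finally show ?thesis .
    qed
    have nn: "0 \<le> (\<Sum>x\<in>Fs n. p ^ n * (1 - p) ^ (card \<circ> snd) x)" for n using p by (intro sum_nonneg) simp
    show "B_site V E Pc x0 p = limsup (\<lambda>n. ereal (root n (\<Sum>x\<in>Fs n. p ^ n * (1 - p) ^ (card \<circ> snd) x)))"
      unfolding B_site_def EN eroot_ennreal[OF nn] ..
  qed
qed


lemma anchor_from_walks:
  fixes g :: "nat \<Rightarrow> nat \<Rightarrow> 'v" and \<pi> :: "nat \<Rightarrow> nat \<Rightarrow> 'v list" and \<sigma> :: "nat \<Rightarrow> 'v list"
  assumes G: "graph V E" and deg: "\<forall>v\<in>V. finite {e\<in>E. v \<in> e} \<and> card {e\<in>E. v \<in> e} \<le> \<Delta>"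
    and \<pi>: "\<forall>j k. walk V E (\<pi> j k) \<and> hd (\<pi> j k) = g j k \<and> last (\<pi> j k) = g j (Suc k)"
    and \<sigma>: "\<forall>j. walk V E (\<sigma> j) \<and> hd (\<sigma> j) = x0 \<and> last (\<sigma> j) = g j 0 \<and> length (\<sigma> j) \<le> lL * j + 1"
    and inj: "\<forall>j. inj (g j)"
    and mult: "\<forall>e. finite {(j, k). e \<in> walk_edges (\<pi> j k)} \<and> card {(j, k). e \<in> walk_edges (\<pi> j k)} \<le> M"
  shows "\<forall>P dP. interface V E Pc x0 P dP \<longrightarrow>
        (\<exists>y\<in>\<Union>dP. \<exists>w. walk V E w \<and> hd w = x0 \<and> last w = y \<and> length w \<le> (lL * M) * card dP + 1)"
proof (intro allI impI)
  fix P dP assume I: "interface V E Pc x0 P dP"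
  define C where "C = comp V (E - dP) x0"
  have finC: "finite C" using I unfolding interface_def C_def by blast
  have finDP: "finite dP" using interface_bound[OF G deg I] by simp
  define R where "R = lL * M * card dP"
  show "\<exists>y\<in>\<Union>dP. \<exists>w. walk V E w \<and> hd w = x0 \<and> last w = y \<and> length w \<le> (lL * M) * card dP + 1"
  proof (rule ccontr)
    assume na: "\<not> (\<exists>y\<in>\<Union>dP. \<exists>w. walk V E w \<and> hd w = x0 \<and> last w = y \<and> length w \<le> (lL * M) * card dP + 1)"
    have short: "last w \<in> C" if w: "walk V E w" "hd w = x0" "length w \<le> R + 1" for w
    proof -
      have nv: "v \<notin> \<Union>dP" if v: "v \<in> set w" for v
      proof
        assume vd: "v \<in> \<Union>dP"
        obtain as bs where ws: "w = as @ v # bs" using split_list[OF v] by blast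
        have ws': "w = (as @ [v]) @ bs" using ws by simp
        have "walk_edges (as @ [v]) \<subseteq> walk_edges ((as @ [v]) @ bs)" by (rule walk_edges_prefix)
        then have "walk_edges (as @ [v]) \<subseteq> walk_edges w" unfolding ws' .
        moreover have "set (as @ [v]) \<subseteq> set w" unfolding ws' by auto
        ultimately have "walk V E (as @ [v])" using w(1) unfolding walk_def by blast
        moreover have "hd (as @ [v]) = x0" using w(2) ws by (cases as) simp_all
        moreover have "length (as @ [v]) \<le> (lL * M) * card dP + 1" using w(3) ws unfolding R_def by simp
        ultimately have "\<exists>w. walk V E w \<and> hd w = x0 \<and> last w = v \<and> length w \<le> (lL * M) * card dP + 1" by auto
        then show False using na vd by blast
      qed
      have "walk_edges w \<subseteq> E - dP"
      proof
        fix e assume e: "e \<in> walk_edges w"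
        then have "e \<in> E" using w(1) unfolding walk_def by blast
        moreover have "e \<subseteq> set w" by (rule walk_edges_sub_set[OF e])
        moreover obtain a b where "e = {a, b}" using walk_edges_mem[OF e] by blast
        ultimately have "e \<notin> dP" using nv by blast
        then show "e \<in> E - dP" using \<open>e \<in> E\<close> by simp
      qed
      then have "walk V (E - dP) w" using w(1) unfolding walk_def by simp
      moreover have "x0 \<in> V" using w(1,2) walk_hd_in by metis
      ultimately have "last w \<in> comp V (E - dP) x0" unfolding comp_iff using w(2) by blast
      then show ?thesis unfolding C_def .
    qed
    define J where "J = M * card dP"
    have cross: "\<exists>e\<in>dP. \<exists>k. e \<in> walk_edges (\<pi> j k)" if j: "j \<le> J" for j
    proof (rule ccontr)
      assume nc: "\<not> (\<exists>e\<in>dP. \<exists>k. e \<in> walk_edges (\<pi> j k))"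
      have "length (\<sigma> j) \<le> lL * j + 1" using \<sigma> by blast
      also have "\<dots> \<le> lL * J + 1" using j by simp
      finally have "length (\<sigma> j) \<le> R + 1" unfolding R_def J_def by (simp add: mult_ac)
      then have g0: "g j 0 \<in> C" using short[of "\<sigma> j"] \<sigma> by simp
      have allC: "g j k \<in> C" for k
      proof (induction k)
        case 0 then show ?case using g0 .
      next
        case (Suc k)
        have pw: "walk V E (\<pi> j k)" "hd (\<pi> j k) = g j k" "last (\<pi> j k) = g j (Suc k)" using \<pi> by blast+
        have "walk_edges (\<pi> j k) \<subseteq> E - dP" using pw(1) nc unfolding walk_def by blast
        then have w': "walk V (E - dP) (\<pi> j k)" using pw(1) unfolding walk_def by simp
        have "hd (\<pi> j k) \<in> comp V (E - dP) x0" using Suc.IH pw(2) unfolding C_def by simp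
        then have "set (\<pi> j k) \<subseteq> comp V (E - dP) x0" by (rule walk_in_comp[OF w'])
        moreover have "last (\<pi> j k) \<in> set (\<pi> j k)" using pw(1) unfolding walk_def by simp
        ultimately show ?case using pw(3) unfolding C_def by auto
      qed
      then have "range (g j) \<subseteq> C" by blast
      then have "finite (range (g j))" using finC by (rule finite_subset)
      then have "finite (UNIV :: nat set)" using inj by (metis finite_imageD)
      then show False by simp
    qed
    let ?S = "\<lambda>e. fst ` {(j, k). e \<in> walk_edges (\<pi> j k)}"
    have sub: "{0..J} \<subseteq> (\<Union>e\<in>dP. ?S e)"
    proof
      fix j assume "j \<in> {0..J}"
      then obtain e k where "e \<in> dP" "e \<in> walk_edges (\<pi> j k)" using cross by force
      then show "j \<in> (\<Union>e\<in>dP. ?S e)" by force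
    qed
    have finS: "\<forall>e\<in>dP. finite (?S e) \<and> card (?S e) \<le> M"
    proof
      fix e assume "e \<in> dP"
      have f: "finite {(j, k). e \<in> walk_edges (\<pi> j k)}" using mult by blast
      have "card (?S e) \<le> card {(j, k). e \<in> walk_edges (\<pi> j k)}" using f by (rule card_image_le)
      also have "\<dots> \<le> M" using mult by blast
      finally show "finite (?S e) \<and> card (?S e) \<le> M" using f by simp
    qed
    have finU: "finite (\<Union>e\<in>dP. ?S e)" using finDP finS by blast
    have "Suc J = card {0..J}" by simp
    also have "\<dots> \<le> card (\<Union>e\<in>dP. ?S e)" by (rule card_mono[OF finU sub])
    also have "\<dots> \<le> (\<Sum>e\<in>dP. card (?S e))" by (rule card_UN_le[OF finDP])
    also have "\<dots> \<le> (\<Sum>e\<in>dP. M)" using finS by (intro sum_mono) blast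
    also have "\<dots> = J" unfolding J_def by simp
    finally show False by simp
  qed
qed


lemma abstract_main:
  fixes g :: "nat \<Rightarrow> nat \<Rightarrow> 'v" and \<pi> :: "nat \<Rightarrow> nat \<Rightarrow> 'v list" and \<sigma> :: "nat \<Rightarrow> 'v list"
  assumes G: "graph V E" and deg: "\<forall>v\<in>V. finite {e\<in>E. v \<in> e} \<and> card {e\<in>E. v \<in> e} \<le> \<Delta>"
    and x0: "x0 \<in> V"
    and \<pi>: "\<forall>j k. walk V E (\<pi> j k) \<and> hd (\<pi> j k) = g j k \<and> last (\<pi> j k) = g j (Suc k)"
    and \<sigma>: "\<forall>j. walk V E (\<sigma> j) \<and> hd (\<sigma> j) = x0 \<and> last (\<sigma> j) = g j 0 \<and> length (\<sigma> j) \<le> lL * j + 1"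
    and inj: "\<forall>j. inj (g j)"
    and mult: "\<forall>e. finite {(j, k). e \<in> walk_edges (\<pi> j k)} \<and> card {(j, k). e \<in> walk_edges (\<pi> j k)} \<le> M"
  shows "continuous_on_01 (B_bond V E Pc x0) \<and> continuous_on_01 (B_site V E Pc x0)"
proof -
  note an = anchor_from_walks[OF G deg \<pi> \<sigma> inj mult, of Pc]
  show ?thesis using bond_part[OF G deg x0 an] site_part[OF G deg x0 an] by simp
qed

lemma walk_mono: "walk V E w \<Longrightarrow> E \<subseteq> E' \<Longrightarrow> walk V E' w"
  unfolding walk_def by blast


lemma subsingleton_card:
  assumes "\<forall>a\<in>S. \<forall>b\<in>S. a = b"
  shows "finite S \<and> card S \<le> 1"
proof (cases "S = {}")
  case True then show ?thesis by simp
next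
  case False
  then obtain a where a: "a \<in> S" by blast
  then have "S = {a}" using assms by blast
  then show ?thesis by simp
qed

definition gz :: "(nat \<Rightarrow> int) \<Rightarrow> nat \<Rightarrow> nat \<Rightarrow> (nat \<Rightarrow> int)" where
  "gz x0 j k = (\<lambda>t. x0 t + (if t = 0 then int k else 0) + (if t = 1 then int j else 0))"

definition subv :: "(nat \<Rightarrow> int) \<Rightarrow> (nat \<Rightarrow> int) \<Rightarrow> nat \<Rightarrow> int" where
  "subv x y = (\<lambda>k. x k - y k)"

lemma gz_Suc_k: "gz x0 j (Suc k) = addv (gz x0 j k) (unitv 0)"
  by (rule ext) (simp add: gz_def addv_def unitv_def)

lemma gz_Suc_j: "gz x0 (Suc j) 0 = addv (gz x0 j 0) (unitv 1)"
  by (rule ext) (simp add: gz_def addv_def unitv_def)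

lemma gz_00: "gz x0 0 0 = x0"
  by (rule ext) (simp add: gz_def)

lemma gz_0: "gz x0 j k 0 = x0 0 + int k"
  by (simp add: gz_def)
lemma gz_1: "gz x0 j k 1 = x0 1 + int j"
  by (simp add: gz_def)

lemma gz_eq: "gz x0 j k = gz x0 j' k' \<Longrightarrow> j = j' \<and> k = k'"
proof -
  assume h: "gz x0 j k = gz x0 j' k'"
  have "gz x0 j k 0 = gz x0 j' k' 0" "gz x0 j k 1 = gz x0 j' k' 1" using h by simp_all
  then show ?thesis unfolding gz_def by simp
qed

lemma gz_V: "x0 \<in> Zd_V d \<Longrightarrow> 2 \<le> d \<Longrightarrow> gz x0 j k \<in> Zd_V d"
  unfolding Zd_V_def gz_def by auto

lemma addv_V: "x \<in> Zd_V d \<Longrightarrow> i < d \<Longrightarrow> addv x (unitv i) \<in> Zd_V d"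
  unfolding Zd_V_def addv_def unitv_def by auto

lemma Zd_edge: "x \<in> Zd_V d \<Longrightarrow> i < d \<Longrightarrow> {x, addv x (unitv i)} \<in> Zd_E d"
  unfolding Zd_E_def by blast

lemma addv_neq: "x \<noteq> addv x (unitv i)"
proof
  assume "x = addv x (unitv i)"
  then have "x i = addv x (unitv i) i" by simp
  then show False by (simp add: addv_def unitv_def)
qed

lemma addv2_neq: "x \<noteq> addv (addv x (unitv i)) (unitv j)"
proof
  assume "x = addv (addv x (unitv i)) (unitv j)"
  then have "x i = addv (addv x (unitv i)) (unitv j) i" by simp
  then show False by (simp add: addv_def unitv_def split: if_splits)
qed

lemma graph_Zd: "graph (Zd_V d) (Zd_E d)"
  unfolding graph_def Zd_E_def using addv_neq addv_V by blast

lemma graph_Td: "graph (Zd_V d) (Td_E d)"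
proof -
  have "\<exists>u v. u \<noteq> v \<and> u \<in> Zd_V d \<and> v \<in> Zd_V d \<and> e = {u, v}" if e: "e \<in> Td_E d" for e
  proof (cases "e \<in> Zd_E d")
    case True then show ?thesis using graph_Zd unfolding graph_def by blast
  next
    case False
    then obtain x i j where x: "e = {x, addv (addv x (unitv i)) (unitv j)}" "x \<in> Zd_V d" "i < j" "j < d"
      using e unfolding Td_E_def by blast
    have "addv (addv x (unitv i)) (unitv j) \<in> Zd_V d" using x addv_V by simp
    then show ?thesis using x addv2_neq by blast
  qed
  then show ?thesis unfolding graph_def by blast
qed

lemma subv_addv: "addv (subv v (unitv i)) (unitv i) = v"
  by (rule ext) (simp add: addv_def subv_def)

lemma subv2_addv: "addv (addv (subv (subv v (unitv j)) (unitv i)) (unitv i)) (unitv j) = v"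
  by (rule ext) (simp add: addv_def subv_def)

lemma deg_Zd:
  "finite {e\<in>Zd_E d. v \<in> e} \<and> card {e\<in>Zd_E d. v \<in> e} \<le> 2 * d"
proof -
  let ?f = "\<lambda>(i, b). if b then {v, addv v (unitv i)} else {subv v (unitv i), v}"
  have sub: "{e\<in>Zd_E d. v \<in> e} \<subseteq> ?f ` ({0..<d} \<times> (UNIV :: bool set))"
  proof
    fix e assume "e \<in> {e\<in>Zd_E d. v \<in> e}"
    then obtain x i where x: "e = {x, addv x (unitv i)}" "i < d" "v \<in> e" unfolding Zd_E_def by blast
    show "e \<in> ?f ` ({0..<d} \<times> (UNIV :: bool set))"
    proof (cases "v = x")
      case True
      then have "e = ?f (i, True)" using x by simp
      then show ?thesis using x(2) by force
    next
      case False
      then have v: "v = addv x (unitv i)" using x by blast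
      then have "x = subv v (unitv i)" by (simp add: fun_eq_iff addv_def subv_def)
      then have "e = ?f (i, False)" using x v by auto
      then show ?thesis using x(2) by force
    qed
  qed
  have "card (?f ` ({0..<d} \<times> (UNIV :: bool set))) \<le> card ({0..<d} \<times> (UNIV :: bool set))" by (rule card_image_le) simp
  also have "\<dots> = 2 * d" by (simp add: card_cartesian_product)
  finally show ?thesis using card_mono[OF _ sub] finite_subset[OF sub] by fastforce
qed

lemma deg_Td:
  "finite {e\<in>Td_E d. v \<in> e} \<and> card {e\<in>Td_E d. v \<in> e} \<le> 2 * d + 2 * d * d"
proof -
  let ?f = "\<lambda>(i, j, b). if b then {v, addv (addv v (unitv i)) (unitv j)} else {subv (subv v (unitv j)) (unitv i), v}"
  let ?A = "{0..<d} \<times> {0..<d} \<times> (UNIV :: bool set)"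
  have sub: "{e\<in>Td_E d. v \<in> e} \<subseteq> {e\<in>Zd_E d. v \<in> e} \<union> ?f ` ?A"
  proof
    fix e assume e: "e \<in> {e\<in>Td_E d. v \<in> e}"
    show "e \<in> {e\<in>Zd_E d. v \<in> e} \<union> ?f ` ?A"
    proof (cases "e \<in> Zd_E d")
      case True then show ?thesis using e by blast
    next
      case False
      then obtain x i j where x: "e = {x, addv (addv x (unitv i)) (unitv j)}" "i < j" "j < d" "v \<in> e"
        using e unfolding Td_E_def by blast
      show ?thesis
      proof (cases "v = x")
        case True
        then have "e = ?f (i, j, True)" using x by simp
        then show ?thesis using x(2,3) by force
      next
        case False
        then have v: "v = addv (addv x (unitv i)) (unitv j)" using x by blast
        then have "x = subv (subv v (unitv j)) (unitv i)" by (simp add: fun_eq_iff addv_def subv_def)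
        then have "e = ?f (i, j, False)" using x v by auto
        then show ?thesis using x(2,3) by force
      qed
    qed
  qed
  have c2: "card (?f ` ?A) \<le> 2 * d * d"
  proof -
    have "card (?f ` ?A) \<le> card ?A" by (rule card_image_le) simp
    also have "\<dots> = 2 * d * d" by (simp add: card_cartesian_product)
    finally show ?thesis .
  qed
  have f2: "finite (?f ` ?A)" by simp
  have fu: "finite ({e\<in>Zd_E d. v \<in> e} \<union> ?f ` ?A)" using deg_Zd[of d v] f2 by simp
  have "card {e\<in>Td_E d. v \<in> e} \<le> card ({e\<in>Zd_E d. v \<in> e} \<union> ?f ` ?A)" by (rule card_mono[OF fu sub])
  also have "\<dots> \<le> card {e\<in>Zd_E d. v \<in> e} + card (?f ` ?A)" by (rule card_Un_le)
  also have "\<dots> \<le> 2 * d + 2 * d * d" using deg_Zd[of d v] c2 by simp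
  finally show ?thesis using finite_subset[OF sub fu] by simp
qed


fun sz :: "(nat \<Rightarrow> int) \<Rightarrow> nat \<Rightarrow> (nat \<Rightarrow> int) list" where
  "sz x0 0 = [x0]"
| "sz x0 (Suc j) = sz x0 j @ [gz x0 (Suc j) 0]"

lemma sz_props:
  assumes x0: "x0 \<in> Zd_V d" and d: "2 \<le> d"
  shows "walk (Zd_V d) (Zd_E d) (sz x0 j) \<and> hd (sz x0 j) = x0 \<and> last (sz x0 j) = gz x0 j 0 \<and> length (sz x0 j) = Suc j"
proof (induction j)
  case 0 then show ?case using x0 by (simp add: walk_def gz_00)
next
  case (Suc j)
  have ne: "sz x0 j \<noteq> []" using Suc.IH by (auto simp: walk_def)
  have e: "{gz x0 j 0, gz x0 (Suc j) 0} \<in> Zd_E d"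
    unfolding gz_Suc_j by (rule Zd_edge) (use gz_V[OF x0 d] d in simp_all)
  have "walk_edges (sz x0 (Suc j)) = insert {gz x0 j 0, gz x0 (Suc j) 0} (walk_edges (sz x0 j))"
    using ne Suc.IH by (simp add: walk_edges_snoc)
  then have "walk (Zd_V d) (Zd_E d) (sz x0 (Suc j))" using Suc.IH e gz_V[OF x0 d] unfolding walk_def by simp
  then show ?case using Suc.IH ne by simp
qed

lemma Zd_both:
  assumes d: "2 \<le> d" and x0: "x0 \<in> Zd_V d"
  shows "continuous_on_01 (B_bond (Zd_V d) (Zd_E d) (Zd_P d) x0) \<and> continuous_on_01 (B_site (Zd_V d) (Zd_E d) (Zd_P d) x0)"
    and "continuous_on_01 (B_bond (Zd_V d) (Td_E d) (Td_P d) x0) \<and> continuous_on_01 (B_site (Zd_V d) (Td_E d) (Td_P d) x0)"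
proof -
  let ?g = "gz x0" and ?\<pi> = "\<lambda>j k. [gz x0 j k, gz x0 j (Suc k)]" and ?\<sigma> = "sz x0"
  have \<pi>: "\<forall>j k. walk (Zd_V d) (Zd_E d) (?\<pi> j k) \<and> hd (?\<pi> j k) = ?g j k \<and> last (?\<pi> j k) = ?g j (Suc k)"
  proof (intro allI)
    fix j k
    have "{gz x0 j k, gz x0 j (Suc k)} \<in> Zd_E d"
      unfolding gz_Suc_k by (rule Zd_edge) (use gz_V[OF x0 d] d in simp_all)
    then show "walk (Zd_V d) (Zd_E d) (?\<pi> j k) \<and> hd (?\<pi> j k) = ?g j k \<and> last (?\<pi> j k) = ?g j (Suc k)"
      using gz_V[OF x0 d] unfolding walk_def by simp
  qed
  have \<sigma>: "\<forall>j. walk (Zd_V d) (Zd_E d) (?\<sigma> j) \<and> hd (?\<sigma> j) = x0 \<and> last (?\<sigma> j) = ?g j 0 \<and> length (?\<sigma> j) \<le> 1 * j + 1"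
    using sz_props[OF x0 d] by simp
  have inj: "\<forall>j. inj (?g j)" unfolding inj_def using gz_eq by blast
  have mult: "\<forall>e. finite {(j, k). e \<in> walk_edges (?\<pi> j k)} \<and> card {(j, k). e \<in> walk_edges (?\<pi> j k)} \<le> 1"
  proof
    fix e
    show "finite {(j, k). e \<in> walk_edges (?\<pi> j k)} \<and> card {(j, k). e \<in> walk_edges (?\<pi> j k)} \<le> 1"
    proof (rule subsingleton_card, intro ballI)
      fix a b assume a: "a \<in> {(j, k). e \<in> walk_edges (?\<pi> j k)}" and b: "b \<in> {(j, k). e \<in> walk_edges (?\<pi> j k)}"
      obtain j k where jk: "a = (j, k)" "e = {gz x0 j k, gz x0 j (Suc k)}" using a by (cases a) simp
      obtain j' k' where jk': "b = (j', k')" "e = {gz x0 j' k', gz x0 j' (Suc k')}" using b by (cases b) simp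
      have E: "{gz x0 j k, gz x0 j (Suc k)} = {gz x0 j' k', gz x0 j' (Suc k')}" using jk jk' by simp
      then have "gz x0 j k \<in> {gz x0 j' k', gz x0 j' (Suc k')}" by blast
      then have "(j = j' \<and> k = k') \<or> (j = j' \<and> k = Suc k')" using gz_eq by blast
      moreover have "gz x0 j (Suc k) \<in> {gz x0 j' k', gz x0 j' (Suc k')}" using E by blast
      then have "(j = j' \<and> Suc k = k') \<or> (j = j' \<and> Suc k = Suc k')" using gz_eq by blast
      ultimately have "j = j' \<and> k = k'" by auto
      then show "a = b" using jk jk' by simp
    qed
  qed
  have degZ: "\<forall>v\<in>Zd_V d. finite {e\<in>Zd_E d. v \<in> e} \<and> card {e\<in>Zd_E d. v \<in> e} \<le> 2 * d + 2 * d * d"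
    using deg_Zd by (meson le_add1 le_trans)
  have degT: "\<forall>v\<in>Zd_V d. finite {e\<in>Td_E d. v \<in> e} \<and> card {e\<in>Td_E d. v \<in> e} \<le> 2 * d + 2 * d * d"
    using deg_Td by blast
  show "continuous_on_01 (B_bond (Zd_V d) (Zd_E d) (Zd_P d) x0) \<and> continuous_on_01 (B_site (Zd_V d) (Zd_E d) (Zd_P d) x0)"
    by (rule abstract_main[OF graph_Zd degZ x0 \<pi> \<sigma> inj mult])
  have sub: "Zd_E d \<subseteq> Td_E d" unfolding Td_E_def by blast
  have \<pi>': "\<forall>j k. walk (Zd_V d) (Td_E d) (?\<pi> j k) \<and> hd (?\<pi> j k) = ?g j k \<and> last (?\<pi> j k) = ?g j (Suc k)"
    using \<pi> walk_mono[OF _ sub] by blast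
  have \<sigma>': "\<forall>j. walk (Zd_V d) (Td_E d) (?\<sigma> j) \<and> hd (?\<sigma> j) = x0 \<and> last (?\<sigma> j) = ?g j 0 \<and> length (?\<sigma> j) \<le> 1 * j + 1"
    using \<sigma> walk_mono[OF _ sub] by blast
  show "continuous_on_01 (B_bond (Zd_V d) (Td_E d) (Td_P d) x0) \<and> continuous_on_01 (B_site (Zd_V d) (Td_E d) (Td_P d) x0)"
    by (rule abstract_main[OF graph_Td degT x0 \<pi>' \<sigma>' inj mult])
qed


lemma indep2:
  fixes a b :: complex
  assumes "independent {a, b}" "a \<noteq> b" "r *\<^sub>R a + s *\<^sub>R b = 0"
  shows "r = 0 \<and> s = 0"
proof -
  have ab: "a \<notin> span {b}" "independent {b}" using assms(1,2) by (simp_all add: independent_insert)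
  have b0: "b \<noteq> 0" using ab(2) by simp
  have r0: "r = 0"
  proof (rule ccontr)
    assume "r \<noteq> 0"
    have "r *\<^sub>R a = - (s *\<^sub>R b)" using assms(3) by (simp add: eq_neg_iff_add_eq_0)
    then have "inverse r *\<^sub>R (r *\<^sub>R a) = inverse r *\<^sub>R (- (s *\<^sub>R b))" by simp
    then have "a = (- (inverse r * s)) *\<^sub>R b" using \<open>r \<noteq> 0\<close> by simp
    moreover have "(- (inverse r * s)) *\<^sub>R b \<in> span {b}" by (rule span_scale[OF span_base]) simp
    ultimately have "a \<in> span {b}" by simp
    then show False using ab(1) by simp
  qed
  then have "s *\<^sub>R b = 0" using assms(3) by simp
  then have "s = 0" using b0 by simp
  then show ?thesis using r0 by simp
qed

lemma indep_nat:
  fixes a b :: complex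
  assumes "independent {a, b}" "a \<noteq> b"
    and "of_nat j * b + of_nat k * a = of_nat j' * b + of_nat k' * a"
  shows "j = j' \<and> k = k'"
proof -
  have "(real k - real k') *\<^sub>R a + (real j - real j') *\<^sub>R b = 0"
    using assms(3) by (simp add: scaleR_conv_of_real algebra_simps)
  then have "real k - real k' = 0 \<and> real j - real j' = 0" by (rule indep2[OF assms(1,2)])
  then show ?thesis by simp
qed

definition tclosed :: "complex set \<Rightarrow> complex set set \<Rightarrow> complex \<Rightarrow> bool" where
  "tclosed V E t \<longleftrightarrow> (\<forall>v\<in>V. v + t \<in> V) \<and> (\<forall>e\<in>E. (\<lambda>z. z + t) ` e \<in> E)"

lemma tclosed_0: "tclosed V E 0"
  unfolding tclosed_def by simp

lemma tclosed_add: "tclosed V E s \<Longrightarrow> tclosed V E t \<Longrightarrow> tclosed V E (s + t)"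
proof -
  assume s: "tclosed V E s" and t: "tclosed V E t"
  have "(\<lambda>z. z + (s + t)) ` e = (\<lambda>z. z + t) ` ((\<lambda>z. z + s) ` e)" for e
    by (simp add: image_image add.assoc)
  then show ?thesis using s t unfolding tclosed_def by (simp add: add.assoc[symmetric])
qed

lemma tclosed_gen:
  assumes V: "translate c ` V = V" and E: "(\<lambda>e. translate c ` e) ` E = E"
  shows "tclosed V E c \<and> tclosed V E (- c)"
proof
  show "tclosed V E c" unfolding tclosed_def
  proof
    show "\<forall>v\<in>V. v + c \<in> V" using V unfolding translate_def by blast
    show "\<forall>e\<in>E. (\<lambda>z. z + c) ` e \<in> E"
    proof
      fix e assume "e \<in> E"
      then have "(\<lambda>e. translate c ` e) e \<in> (\<lambda>e. translate c ` e) ` E" by (rule imageI)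
      then show "(\<lambda>z. z + c) ` e \<in> E" using E unfolding translate_def by simp
    qed
  qed
  show "tclosed V E (- c)" unfolding tclosed_def
  proof
    show "\<forall>v\<in>V. v + - c \<in> V"
    proof
      fix v assume "v \<in> V"
      then have "v \<in> translate c ` V" using V by simp
      then obtain u where "u \<in> V" "v = u + c" unfolding translate_def by blast
      then show "v + - c \<in> V" by simp
    qed
    show "\<forall>e\<in>E. (\<lambda>z. z + - c) ` e \<in> E"
    proof
      fix e assume "e \<in> E"
      then have "e \<in> (\<lambda>e. translate c ` e) ` E" using E by simp
      then obtain e' where e': "e' \<in> E" "e = translate c ` e'" by blast
      have "(\<lambda>z. z + - c) ` e = e'" unfolding e'(2) translate_def by (simp add: image_image)
      then show "(\<lambda>z. z + - c) ` e \<in> E" using e'(1) by simp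
    qed
  qed
qed

lemma tclosed_nat: "tclosed V E c \<Longrightarrow> tclosed V E (of_nat n * c)"
proof (induction n)
  case 0 then show ?case by (simp add: tclosed_0)
next
  case (Suc n)
  then have "tclosed V E (of_nat n * c + c)" using tclosed_add by blast
  then show ?case by (simp add: algebra_simps)
qed

lemma tclosed_int:
  assumes "tclosed V E c" "tclosed V E (- c)"
  shows "tclosed V E (of_int m * c)"
proof (cases "m \<ge> 0")
  case True
  then have "m = int (nat m)" by simp
  then obtain n where "m = int n" by blast
  then show ?thesis using tclosed_nat[OF assms(1), of n] by simp
next
  case False
  then have "m = - int (nat (- m))" by simp
  then obtain n where "m = - int n" by blast
  then show ?thesis using tclosed_nat[OF assms(2), of n] by simp
qed

lemma walk_edges_map: "walk_edges (map f w) = (\<lambda>e. f ` e) ` walk_edges w"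
  by (induction w rule: induct_list012) auto

lemma walk_translate:
  assumes "tclosed V E t" "walk V E w"
  shows "walk V E (map (\<lambda>z. z + t) w)"
  using assms unfolding walk_def tclosed_def walk_edges_map by auto


fun sp :: "complex list \<Rightarrow> complex \<Rightarrow> complex \<Rightarrow> nat \<Rightarrow> complex list" where
  "sp pb x0 b 0 = [x0]"
| "sp pb x0 b (Suc j) = sp pb x0 b j @ tl (map (\<lambda>z. z + of_nat j * b) pb)"

lemma sp_props:
  assumes tb: "\<forall>j. tclosed V E (of_nat j * b)" and pb: "walk V E pb" "hd pb = x0" "last pb = x0 + b"
  shows "walk V E (sp pb x0 b j) \<and> hd (sp pb x0 b j) = x0 \<and> last (sp pb x0 b j) = x0 + of_nat j * b
      \<and> length (sp pb x0 b j) \<le> length pb * j + 1"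
proof (induction j)
  case 0
  have "x0 \<in> V" using pb walk_hd_in by metis
  then show ?case by (simp add: walk_def)
next
  case (Suc j)
  let ?ys = "map (\<lambda>z. z + of_nat j * b) pb"
  have wy: "walk V E ?ys" by (rule walk_translate[OF spec[OF tb] pb(1)])
  have ne: "pb \<noteq> []" using pb(1) unfolding walk_def by simp
  have hy: "hd ?ys = x0 + of_nat j * b" using ne pb(2) by (simp add: hd_map)
  have ly: "last ?ys = x0 + of_nat (Suc j) * b" using ne pb(3) by (simp add: last_map algebra_simps)
  have lx: "last (sp pb x0 b j) = hd ?ys" using Suc.IH hy by simp
  have wa: "walk V E (sp pb x0 b j @ tl ?ys)" "hd (sp pb x0 b j @ tl ?ys) = hd (sp pb x0 b j)"
    "last (sp pb x0 b j @ tl ?ys) = last ?ys"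
    using walk_append[of V E "sp pb x0 b j" ?ys] Suc.IH wy lx by simp_all
  have "length (sp pb x0 b j @ tl ?ys) = length (sp pb x0 b j) + (length pb - 1)" by simp
  also have "\<dots> \<le> length pb * j + 1 + (length pb - 1)" using Suc.IH by simp
  also have "\<dots> \<le> length pb * Suc j + 1" using ne by (cases "length pb") simp_all
  finally have len: "length (sp pb x0 b j @ tl ?ys) \<le> length pb * Suc j + 1" .
  have e: "sp pb x0 b (Suc j) = sp pb x0 b j @ tl ?ys" by simp
  have h1: "hd (sp pb x0 b j @ tl ?ys) = x0" using wa(2) Suc.IH by simp
  show ?case unfolding e using wa(1) h1 wa(3) ly len by simp
qed

lemma planar_both:
  assumes pl: "planar_lattice V E Pc" and x0: "x0 \<in> V"
  shows "continuous_on_01 (B_bond V E Pc x0) \<and> continuous_on_01 (B_site V E Pc x0)"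
proof -
  have G: "graph V E" using pl unfolding planar_lattice_def by (elim conjE)
  have cg: "connected_graph V E" using pl unfolding planar_lattice_def by (elim conjE)
  have lf: "locally_finite V E" using pl unfolding planar_lattice_def by (elim conjE)
  obtain \<gamma> :: "complex set \<Rightarrow> real \<Rightarrow> complex" and a b S where ab: "independent {a, b}" "a \<noteq> b"
    and T: "\<forall>t\<in>{a, b}. translate t ` V = V \<and> (\<lambda>e. translate t ` e) ` E = E \<and>
               (\<forall>e\<in>E. path_image (\<gamma> (translate t ` e)) = translate t ` path_image (\<gamma> e))"
    and S: "finite S" "S \<subseteq> V" "\<forall>v\<in>V. \<exists>u\<in>S. \<exists>m n :: int. v = u + of_int m * a + of_int n * b"
    using pl unfolding planar_lattice_def by (elim conjE exE) (rule that)
  have Ta: "translate a ` V = V \<and> (\<lambda>e. translate a ` e) ` E = E \<and>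
               (\<forall>e\<in>E. path_image (\<gamma> (translate a ` e)) = translate a ` path_image (\<gamma> e))"
    using T by (rule bspec) simp
  have Tb: "translate b ` V = V \<and> (\<lambda>e. translate b ` e) ` E = E \<and>
               (\<forall>e\<in>E. path_image (\<gamma> (translate b ` e)) = translate b ` path_image (\<gamma> e))"
    using T by (rule bspec) simp
  have ta1: "translate a ` V = V" using Ta by (elim conjE)
  have ta2: "(\<lambda>e. translate a ` e) ` E = E" using Ta by (elim conjE)
  have tb1: "translate b ` V = V" using Tb by (elim conjE)
  have tb2: "(\<lambda>e. translate b ` e) ` E = E" using Tb by (elim conjE)
  note ta = ta1 ta2 and tb = tb1 tb2
  have TA: "tclosed V E a" "tclosed V E (- a)" using tclosed_gen[OF ta] by simp_all
  have TB: "tclosed V E b" "tclosed V E (- b)" using tclosed_gen[OF tb] by simp_all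
  have TL: "tclosed V E (of_int m * a + of_int n * b)" for m n :: int
    using tclosed_add[OF tclosed_int[OF TA] tclosed_int[OF TB]] .
  have TLn: "tclosed V E (of_nat j * b + of_nat k * a)" for j k :: nat
    using TL[of "int k" "int j"] by (simp add: add.commute)
  have TLneg: "tclosed V E (- (of_int m * a + of_int n * b))" for m n :: int
    using TL[of "- m" "- n"] by (simp add: algebra_simps)
  define \<Delta> where "\<Delta> = (\<Sum>u\<in>S. card {e\<in>E. u \<in> e})"
  have deg: "\<forall>v\<in>V. finite {e\<in>E. v \<in> e} \<and> card {e\<in>E. v \<in> e} \<le> \<Delta>"
  proof
    fix v assume v: "v \<in> V"
    then obtain u where u0: "u \<in> S" "\<exists>m n :: int. v = u + of_int m * a + of_int n * b"
      using S(3) by blast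
    then obtain m n :: int where "v = u + of_int m * a + of_int n * b" by blast
    then have u: "u \<in> S" "v = u + (of_int m * a + of_int n * b)" using u0(1) by (simp_all add: add.assoc)
    define t where "t = of_int m * a + of_int n * b"
    have uV: "u \<in> V" using S(2) u(1) by (rule subsetD)
    have fu: "finite {e\<in>E. u \<in> e}" using lf uV unfolding locally_finite_def by blast
    have sub: "{e\<in>E. v \<in> e} \<subseteq> (\<lambda>e. (\<lambda>z. z + t) ` e) ` {e\<in>E. u \<in> e}"
    proof
      fix e assume e: "e \<in> {e\<in>E. v \<in> e}"
      let ?e' = "(\<lambda>z. z + - t) ` e"
      have "?e' \<in> E" using TLneg[of m n] e unfolding tclosed_def t_def by simp
      moreover have "u \<in> ?e'"
      proof -
        have "v + - t \<in> ?e'" using e by blast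
        moreover have "v + - t = u" using u(2) unfolding t_def by simp
        ultimately show ?thesis by simp
      qed
      moreover have "e = (\<lambda>z. z + t) ` ?e'" by (simp add: image_image)
      ultimately show "e \<in> (\<lambda>e. (\<lambda>z. z + t) ` e) ` {e\<in>E. u \<in> e}" by blast
    qed
    have "card {e\<in>E. v \<in> e} \<le> card ((\<lambda>e. (\<lambda>z. z + t) ` e) ` {e\<in>E. u \<in> e})"
      by (rule card_mono[OF finite_imageI[OF fu] sub])
    also have "\<dots> \<le> card {e\<in>E. u \<in> e}" by (rule card_image_le[OF fu])
    also have "\<dots> \<le> \<Delta>" unfolding \<Delta>_def by (rule member_le_sum[OF u(1) _ S(1)]) simp
    finally show "finite {e\<in>E. v \<in> e} \<and> card {e\<in>E. v \<in> e} \<le> \<Delta>"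
      using finite_subset[OF sub finite_imageI[OF fu]] by simp
  qed
  have compV: "comp V E x0 = V" using cg x0 unfolding connected_graph_def by blast
  have xa: "x0 + a \<in> V" using TA(1) x0 unfolding tclosed_def by blast
  have xb: "x0 + b \<in> V" using TB(1) x0 unfolding tclosed_def by blast
  have "x0 + a \<in> comp V E x0" using xa compV by simp
  then obtain pa where pa0: "walk V E pa \<and> hd pa = x0 \<and> last pa = x0 + a"
    unfolding comp_iff by (elim exE)
  then have pa: "walk V E pa" "hd pa = x0" "last pa = x0 + a" by simp_all
  have "x0 + b \<in> comp V E x0" using xb compV by simp
  then obtain pb where pb0: "walk V E pb \<and> hd pb = x0 \<and> last pb = x0 + b"
    unfolding comp_iff by (elim exE)
  then have pb: "walk V E pb" "hd pb = x0" "last pb = x0 + b" by simp_all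
  define g where "g j k = x0 + (of_nat j * b + of_nat k * a)" for j k :: nat
  define \<pi> where "\<pi> j k = map (\<lambda>z. z + (of_nat j * b + of_nat k * a)) pa" for j k :: nat
  have nea: "pa \<noteq> []" using pa(1) unfolding walk_def by simp
  have \<pi>: "\<forall>j k. walk V E (\<pi> j k) \<and> hd (\<pi> j k) = g j k \<and> last (\<pi> j k) = g j (Suc k)"
  proof (intro allI)
    fix j k
    have "walk V E (\<pi> j k)" unfolding \<pi>_def by (rule walk_translate[OF TLn pa(1)])
    moreover have "hd (\<pi> j k) = g j k" unfolding \<pi>_def g_def using nea pa(2) by (simp add: hd_map)
    moreover have "last (\<pi> j k) = g j (Suc k)" unfolding \<pi>_def g_def using nea pa(3) by (simp add: last_map algebra_simps)
    ultimately show "walk V E (\<pi> j k) \<and> hd (\<pi> j k) = g j k \<and> last (\<pi> j k) = g j (Suc k)" by simp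
  qed
  have tbn: "\<forall>j. tclosed V E (of_nat j * b)" using TLn[of _ 0] by simp
  have \<sigma>: "\<forall>j. walk V E (sp pb x0 b j) \<and> hd (sp pb x0 b j) = x0 \<and> last (sp pb x0 b j) = g j 0
      \<and> length (sp pb x0 b j) \<le> length pb * j + 1"
    using sp_props[OF tbn pb] unfolding g_def by simp
  have a0: "a \<noteq> 0"
  proof
    assume "a = 0"
    then have "(1::real) *\<^sub>R a + 0 *\<^sub>R b = 0" by simp
    then have "(1::real) = 0 \<and> (0::real) = 0" by (rule indep2[OF ab])
    then show False by simp
  qed
  have inj: "\<forall>j. inj (g j)"
  proof (intro allI injI)
    fix j k k' assume "g j k = g j k'"
    then have "of_nat k * a = of_nat k' * a" unfolding g_def by simp
    then have "(of_nat k :: complex) = of_nat k'" using a0 by simp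
    then show "k = k'" by simp
  qed
  define M where "M = 2 * length pa"
  have mult: "\<forall>e. finite {(j, k). e \<in> walk_edges (\<pi> j k)} \<and> card {(j, k). e \<in> walk_edges (\<pi> j k)} \<le> M"
  proof
    fix e
    let ?Se = "{(j, k). e \<in> walk_edges (\<pi> j k)}"
    let ?tm = "\<lambda>(j, k). of_nat j * b + of_nat k * a :: complex"
    show "finite ?Se \<and> card ?Se \<le> M"
    proof (cases "?Se = {}")
      case True then show ?thesis by simp
    next
      case False
      then obtain j0 k0 where "e \<in> walk_edges (\<pi> j0 k0)" by blast
      then obtain f0 where f0: "f0 \<in> walk_edges pa" "e = (\<lambda>z. z + (of_nat j0 * b + of_nat k0 * a)) ` f0"
        unfolding \<pi>_def walk_edges_map by blast
      obtain x y where "f0 = {x, y}" using walk_edges_mem[OF f0(1)] by blast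
      then have fe: "finite e" "card e \<le> 2" using f0(2) card_image_le[of f0] by (auto simp: card_insert_if)
      define T where "T = (\<lambda>(w, u). w - u) ` (e \<times> set pa)"
      have finT: "finite T" unfolding T_def using fe by simp
      have cT: "card T \<le> M"
      proof -
        have "card T \<le> card (e \<times> set pa)" unfolding T_def by (rule card_image_le) (use fe in simp)
        also have "\<dots> = card e * card (set pa)" by (rule card_cartesian_product)
        also have "\<dots> \<le> 2 * length pa" using fe card_length[of pa] by (intro mult_le_mono) simp_all
        finally show ?thesis unfolding M_def .
      qed
      have injtm: "inj_on ?tm ?Se"
      proof (rule inj_onI)
        fix p1 p2 assume "p1 \<in> ?Se" "p2 \<in> ?Se" "?tm p1 = ?tm p2"
        then show "p1 = p2" using indep_nat[OF ab] by (cases p1; cases p2) auto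
      qed
      have img: "?tm ` ?Se \<subseteq> T"
      proof
        fix t assume "t \<in> ?tm ` ?Se"
        then obtain p where p: "p \<in> ?Se" "t = ?tm p" by (rule imageE)
        obtain j k where pjk: "p = (j, k)" by (cases p)
        have jk: "e \<in> walk_edges (\<pi> j k)" "t = of_nat j * b + of_nat k * a" using p pjk by simp_all
        then obtain f where f: "f \<in> walk_edges pa" "e = (\<lambda>z. z + t) ` f"
          unfolding \<pi>_def walk_edges_map by blast
        obtain x y where xy: "f = {x, y}" using walk_edges_mem[OF f(1)] by blast
        have "x \<in> set pa" using walk_edges_sub_set[OF f(1)] xy by blast
        moreover have "x + t \<in> e" using f(2) xy by blast
        ultimately have "((x + t), x) \<in> e \<times> set pa" by blast
        then have "(\<lambda>(w, u). w - u) ((x + t), x) \<in> T" unfolding T_def by (rule imageI)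
        then show "t \<in> T" by simp
      qed
      have finSe: "finite ?Se" using finite_imageD[OF finite_subset[OF img finT] injtm] .
      have "card ?Se \<le> card T" by (rule card_inj_on_le[OF injtm img finT])
      then show ?thesis using finSe cT by simp
    qed
  qed
  show ?thesis by (rule abstract_main[OF G deg x0 \<pi> \<sigma> inj mult])
qed


theorem corollary10p3:
  shows "(\<forall>V E Pc (x0::complex). planar_lattice V E Pc \<and> x0 \<in> V \<longrightarrow>
            continuous_on_01 (B_bond V E Pc x0) \<and> continuous_on_01 (B_site V E Pc x0)) \<and>
         (\<forall>d\<ge>2. \<forall>x0\<in>Zd_V d.
            continuous_on_01 (B_bond (Zd_V d) (Zd_E d) (Zd_P d) x0) \<and>
            continuous_on_01 (B_site (Zd_V d) (Zd_E d) (Zd_P d) x0)) \<and>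
         (\<forall>d\<ge>2. \<forall>x0\<in>Zd_V d.
            continuous_on_01 (B_bond (Zd_V d) (Td_E d) (Td_P d) x0) \<and>
            continuous_on_01 (B_site (Zd_V d) (Td_E d) (Td_P d) x0))"
proof -
  have A: "\<forall>V E Pc (x0::complex). planar_lattice V E Pc \<and> x0 \<in> V \<longrightarrow>
            continuous_on_01 (B_bond V E Pc x0) \<and> continuous_on_01 (B_site V E Pc x0)"
    using planar_both by blast
  have B: "\<forall>d\<ge>2. \<forall>x0\<in>Zd_V d.
            continuous_on_01 (B_bond (Zd_V d) (Zd_E d) (Zd_P d) x0) \<and>
            continuous_on_01 (B_site (Zd_V d) (Zd_E d) (Zd_P d) x0)"
    using Zd_both(1) by blast
  have C: "\<forall>d\<ge>2. \<forall>x0\<in>Zd_V d.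
            continuous_on_01 (B_bond (Zd_V d) (Td_E d) (Td_P d) x0) \<and>
            continuous_on_01 (B_site (Zd_V d) (Td_E d) (Td_P d) x0)"
    using Zd_both(2) by blast
  show ?thesis using A B C by (rule conjI[OF _ conjI])
qed

end
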